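(* Let $x,y\in c_0(\mathbb{N})$ be non-negative sequences with $y\prec\prec x$. Then there exists a positive operator $V=\{a_{j,k}\}_{j,k\ge0}\in B(\ell_2(\mathbb{N}))$ such that $a_{j,j}=y_j$ for all $j\ge0$ and $\mu(V)\le\mu(x)$ pointwise.
   Context: For a non-negative sequence $x\in c_0(\mathbb{N})$, $\mu(x)$ denotes its decreasing rearrangement (equivalently, the singular value sequence of the diagonal operator with diagonal $x$). For such sequences, $y\prec\prec x$ means $\sum_{k=0}^n\mu(y)_k\le\sum_{k=0}^n\mu(x)_k$ for all $n\ge0$. For an operator $V$, $\mu(k,V)=\inf\{\|V-R\|_\infty:\mathrm{rank}(R)\le k\}$. *)

theory Defs
  imports Complex_Main
begin

definition is_l2 :: "(nat \<Rightarrow> complex) \<Rightarrow> bool" where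
  "is_l2 x \<longleftrightarrow> summable (\<lambda>n. (cmod (x n))\<^sup>2)"

definition l2norm :: "(nat \<Rightarrow> complex) \<Rightarrow> real" where
  "l2norm x = sqrt (\<Sum>n. (cmod (x n))\<^sup>2)"

definition l2inner :: "(nat \<Rightarrow> complex) \<Rightarrow> (nat \<Rightarrow> complex) \<Rightarrow> complex" where
  "l2inner x y = (\<Sum>n. x n * cnj (y n))"

definition basis_vec :: "nat \<Rightarrow> nat \<Rightarrow> complex" where
  "basis_vec k = (\<lambda>n. if n = k then 1 else 0)"

text \<open>Bounded linear operators on ell_2(N); only their action on ell_2 matters.\<close>
definition is_bdd_op :: "((nat \<Rightarrow> complex) \<Rightarrow> (nat \<Rightarrow> complex)) \<Rightarrow> bool" where
  "is_bdd_op T \<longleftrightarrow>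
     (\<forall>x. is_l2 x \<longrightarrow> is_l2 (T x)) \<and>
     (\<forall>x y c. is_l2 x \<longrightarrow> is_l2 y \<longrightarrow>
        T (\<lambda>n. x n + c * y n) = (\<lambda>n. T x n + c * T y n)) \<and>
     (\<exists>C. \<forall>x. is_l2 x \<longrightarrow> l2norm (T x) \<le> C * l2norm x)"

definition positive_op :: "((nat \<Rightarrow> complex) \<Rightarrow> (nat \<Rightarrow> complex)) \<Rightarrow> bool" where
  "positive_op T \<longleftrightarrow>
     (\<forall>x. is_l2 x \<longrightarrow> Im (l2inner (T x) x) = 0 \<and> 0 \<le> Re (l2inner (T x) x))"

text \<open>Matrix entry a_{j,k} = <T e_k, e_j> = (T e_k)_j.\<close>
definition op_entry :: "((nat \<Rightarrow> complex) \<Rightarrow> (nat \<Rightarrow> complex)) \<Rightarrow> nat \<Rightarrow> nat \<Rightarrow> complex" where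
  "op_entry T j k = T (basis_vec k) j"

definition op_norm :: "((nat \<Rightarrow> complex) \<Rightarrow> (nat \<Rightarrow> complex)) \<Rightarrow> real" where
  "op_norm T = Sup {l2norm (T x) | x. is_l2 x \<and> l2norm x \<le> 1}"

definition rank_le :: "((nat \<Rightarrow> complex) \<Rightarrow> (nat \<Rightarrow> complex)) \<Rightarrow> nat \<Rightarrow> bool" where
  "rank_le R k \<longleftrightarrow> (\<exists>u :: nat \<Rightarrow> nat \<Rightarrow> complex.
      (\<forall>i<k. is_l2 (u i)) \<and>
      (\<forall>x. is_l2 x \<longrightarrow> (\<exists>c :: nat \<Rightarrow> complex. R x = (\<lambda>n. \<Sum>i<k. c i * u i n))))"

definition sing_val :: "nat \<Rightarrow> ((nat \<Rightarrow> complex) \<Rightarrow> (nat \<Rightarrow> complex)) \<Rightarrow> real" where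
  "sing_val k V = Inf {op_norm (\<lambda>x n. V x n - R x n) | R. is_bdd_op R \<and> rank_le R k}"

definition drearr :: "(nat \<Rightarrow> real) \<Rightarrow> nat \<Rightarrow> real" where
  "drearr x n = Inf {t. 0 \<le> t \<and> finite {k. x k > t} \<and> card {k. x k > t} \<le> n}"

definition submaj :: "(nat \<Rightarrow> real) \<Rightarrow> (nat \<Rightarrow> real) \<Rightarrow> bool" where
  "submaj y x \<longleftrightarrow> (\<forall>n. (\<Sum>k\<le>n. drearr y k) \<le> (\<Sum>k\<le>n. drearr x k))"

end

theory Submission
  imports Defs "HOL-Analysis.Analysis"
begin


lemma cmod_sq_Re_Im: "(cmod z)\<^sup>2 = (Re z)\<^sup>2 + (Im z)\<^sup>2"
  by (simp add: cmod_def)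

lemma l2_Re: "is_l2 x \<Longrightarrow> summable (\<lambda>n. (Re (x n))\<^sup>2)"
  unfolding is_l2_def
  by (rule summable_comparison_test'[where g="\<lambda>n. (cmod (x n))\<^sup>2"]) (auto simp: cmod_sq_Re_Im)

lemma l2_Im: "is_l2 x \<Longrightarrow> summable (\<lambda>n. (Im (x n))\<^sup>2)"
  unfolding is_l2_def
  by (rule summable_comparison_test'[where g="\<lambda>n. (cmod (x n))\<^sup>2"]) (auto simp: cmod_sq_Re_Im)

lemma l2_suminf_Re_Im: "is_l2 x \<Longrightarrow> (\<Sum>n. (cmod (x n))\<^sup>2) = (\<Sum>n. (Re (x n))\<^sup>2) + (\<Sum>n. (Im (x n))\<^sup>2)"
  by (simp add: cmod_sq_Re_Im suminf_add l2_Re l2_Im)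

lemma prod_le_sq: "\<bar>a * b\<bar> \<le> (a\<^sup>2 + b\<^sup>2) / (2::real)"
proof -
  have "0 \<le> (\<bar>a\<bar> - \<bar>b\<bar>)\<^sup>2" by simp
  then show ?thesis by (simp add: power2_eq_square algebra_simps abs_mult)
qed

lemma l2_lin: "is_l2 x \<Longrightarrow> is_l2 y \<Longrightarrow> is_l2 (\<lambda>n. x n + c * y n)"
proof -
  assume x: "is_l2 x" and y: "is_l2 y"
  have "(cmod (x n + c * y n))\<^sup>2 \<le> 2 * (cmod (x n))\<^sup>2 + 2 * (cmod c)\<^sup>2 * (cmod (y n))\<^sup>2" for n
  proof -
    have "cmod (x n + c * y n) \<le> cmod (x n) + cmod c * cmod (y n)"
      by (metis norm_mult norm_triangle_ineq)
    then have "(cmod (x n + c * y n))\<^sup>2 \<le> (cmod (x n) + cmod c * cmod (y n))\<^sup>2"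
      by (intro power_mono) auto
    also have "\<dots> \<le> 2 * (cmod (x n))\<^sup>2 + 2 * (cmod c)\<^sup>2 * (cmod (y n))\<^sup>2"
      using prod_le_sq[of "cmod (x n)" "cmod c * cmod (y n)"]
      by (simp add: power2_eq_square algebra_simps)
    finally show ?thesis .
  qed
  moreover have "summable (\<lambda>n. 2 * (cmod (x n))\<^sup>2 + 2 * (cmod c)\<^sup>2 * (cmod (y n))\<^sup>2)"
    using x y unfolding is_l2_def by (intro summable_add summable_mult) auto
  ultimately show ?thesis unfolding is_l2_def
    by (rule_tac summable_comparison_test'[where N=0]) auto
qed


lemma l2_scale_real:
  assumes z: "is_l2 z" and lam: "\<And>p. \<bar>lam p\<bar> \<le> M"
  shows "is_l2 (\<lambda>p. complex_of_real (lam p) * z p)"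
    "(\<Sum>p. (cmod (complex_of_real (lam p) * z p))\<^sup>2) \<le> M\<^sup>2 * (\<Sum>p. (cmod (z p))\<^sup>2)"
proof -
  have b: "(cmod (complex_of_real (lam p) * z p))\<^sup>2 \<le> M\<^sup>2 * (cmod (z p))\<^sup>2" for p
  proof -
    have "\<bar>lam p\<bar>\<^sup>2 \<le> M\<^sup>2" using lam[of p] by (intro power_mono) auto
    then show ?thesis by (simp add: norm_mult power_mult_distrib mult_right_mono)
  qed
  have s: "summable (\<lambda>p. M\<^sup>2 * (cmod (z p))\<^sup>2)" using z unfolding is_l2_def by (intro summable_mult)
  show "is_l2 (\<lambda>p. complex_of_real (lam p) * z p)" unfolding is_l2_def
    by (rule summable_comparison_test'[where N=0, OF s]) (use b in auto)
  then show "(\<Sum>p. (cmod (complex_of_real (lam p) * z p))\<^sup>2) \<le> M\<^sup>2 * (\<Sum>p. (cmod (z p))\<^sup>2)"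
    unfolding is_l2_def using suminf_le[OF b _ s] suminf_mult[of "\<lambda>p. (cmod (z p))\<^sup>2" "M\<^sup>2"] z
    unfolding is_l2_def by auto
qed


locale fam =
  fixes g :: "nat \<Rightarrow> nat \<Rightarrow> real" and sb :: "nat \<Rightarrow> nat"
  assumes supp: "\<And>n p. sb n \<le> p \<Longrightarrow> g n p = 0"
  and P2: "\<And>N c M. finite N \<Longrightarrow> (\<Sum>p<M. (\<Sum>n\<in>N. c n * g n p)\<^sup>2) \<le> (\<Sum>n\<in>N. (c n)\<^sup>2)"
begin

lemma bessel_col_fin: "finite N \<Longrightarrow> (\<Sum>n\<in>N. (g n p)\<^sup>2) \<le> 1"
proof -
  assume fN: "finite N"
  define s where "s = (\<Sum>n\<in>N. (g n p)\<^sup>2)"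
  have s0: "0 \<le> s" unfolding s_def by (simp add: sum_nonneg)
  have "(\<Sum>n\<in>N. g n p * g n p)\<^sup>2 \<le> (\<Sum>p'<Suc p. (\<Sum>n\<in>N. g n p * g n p')\<^sup>2)"
    by (rule member_le_sum) auto
  also have "\<dots> \<le> s" unfolding s_def using P2[OF fN, of "\<lambda>n. g n p" "Suc p"] by simp
  finally have "s\<^sup>2 \<le> s" unfolding s_def by (simp add: power2_eq_square)
  then show ?thesis using s0 unfolding s_def[symmetric]
    by (cases "s = 0") (auto simp: power2_eq_square)
qed

lemma bessel_col_summable: "summable (\<lambda>n. (g n p)\<^sup>2)"
  by (rule summableI_nonneg_bounded[where x=1]) (auto intro: bessel_col_fin)

lemma bessel_col_le: "(\<Sum>n. (g n p)\<^sup>2) \<le> 1"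
  by (rule suminf_le_const[OF bessel_col_summable]) (auto intro: bessel_col_fin)

lemma col_l2: "is_l2 (\<lambda>n. complex_of_real (g n p))"
  unfolding is_l2_def using bessel_col_summable by simp

definition Sop :: "(nat \<Rightarrow> complex) \<Rightarrow> nat \<Rightarrow> complex" where
  "Sop x p = (\<Sum>n. x n * complex_of_real (g n p))"

definition Top :: "(nat \<Rightarrow> complex) \<Rightarrow> nat \<Rightarrow> complex" where
  "Top z n = (\<Sum>p<sb n. z p * complex_of_real (g n p))"

definition Op :: "(nat \<Rightarrow> real) \<Rightarrow> (nat \<Rightarrow> complex) \<Rightarrow> nat \<Rightarrow> complex" where
  "Op lam x = Top (\<lambda>p. complex_of_real (lam p) * Sop x p)"

lemma summable_Sop: "is_l2 x \<Longrightarrow> summable (\<lambda>n. x n * complex_of_real (g n p))"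
proof -
  assume x: "is_l2 x"
  have "summable (\<lambda>n. ((cmod (x n))\<^sup>2 + (g n p)\<^sup>2) / 2)"
    using x bessel_col_summable unfolding is_l2_def
    by (intro summable_divide summable_add) auto
  moreover have "norm (x n * complex_of_real (g n p)) \<le> ((cmod (x n))\<^sup>2 + (g n p)\<^sup>2) / 2" for n
    using prod_le_sq[of "cmod (x n)" "g n p"] by (simp add: norm_mult)
  ultimately show ?thesis by (rule summable_comparison_test'[where N=0]) 
qed

lemma Top_fin_Re: "Re (\<Sum>p<M. z p * complex_of_real (h p)) = (\<Sum>p<M. Re (z p) * h p)"
  by (simp add: Re_sum)
lemma Top_fin_Im: "Im (\<Sum>p<M. z p * complex_of_real (h p)) = (\<Sum>p<M. Im (z p) * h p)"
  by (simp add: Im_sum)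

lemma S_partial_bound:
  "(\<Sum>p<P. (cmod (\<Sum>n<N. x n * complex_of_real (g n p)))\<^sup>2) \<le> (\<Sum>n<N. (cmod (x n))\<^sup>2)"
proof -
  have "(\<Sum>p<P. (cmod (\<Sum>n<N. x n * complex_of_real (g n p)))\<^sup>2)
     = (\<Sum>p<P. (\<Sum>n<N. Re (x n) * g n p)\<^sup>2) + (\<Sum>p<P. (\<Sum>n<N. Im (x n) * g n p)\<^sup>2)"
    by (simp add: cmod_sq_Re_Im Re_sum Im_sum sum.distrib)
  also have "\<dots> \<le> (\<Sum>n<N. (Re (x n))\<^sup>2) + (\<Sum>n<N. (Im (x n))\<^sup>2)"
    by (intro add_mono P2) auto
  also have "\<dots> = (\<Sum>n<N. (cmod (x n))\<^sup>2)"
    by (simp add: cmod_sq_Re_Im sum.distrib)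
  finally show ?thesis .
qed

lemma S_bound:
  assumes x: "is_l2 x"
  shows "is_l2 (Sop x)" "(\<Sum>p. (cmod (Sop x p))\<^sup>2) \<le> (\<Sum>n. (cmod (x n))\<^sup>2)"
proof -
  have fin: "(\<Sum>p<P. (cmod (Sop x p))\<^sup>2) \<le> (\<Sum>n. (cmod (x n))\<^sup>2)" for P
  proof -
    have lim: "(\<lambda>N. \<Sum>p<P. (cmod (\<Sum>n<N. x n * complex_of_real (g n p)))\<^sup>2)
        \<longlonglongrightarrow> (\<Sum>p<P. (cmod (Sop x p))\<^sup>2)"
      unfolding Sop_def
    proof (intro tendsto_sum tendsto_power tendsto_norm)
      fix p show "(\<lambda>N. \<Sum>n<N. x n * complex_of_real (g n p)) \<longlonglongrightarrow> (\<Sum>n. x n * complex_of_real (g n p))"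
        by (rule summable_LIMSEQ[OF summable_Sop[OF x]])
    qed
    show ?thesis
    proof (rule LIMSEQ_le_const2[OF lim], intro exI allI impI)
      fix N
      show "(\<Sum>p<P. (cmod (\<Sum>n<N. x n * complex_of_real (g n p)))\<^sup>2) \<le> (\<Sum>n. (cmod (x n))\<^sup>2)"
        using S_partial_bound[where P=P and N=N and x=x] sum_le_suminf[of "\<lambda>n. (cmod (x n))\<^sup>2" "{..<N}"] x
        unfolding is_l2_def by auto
    qed
  qed
  show "is_l2 (Sop x)" unfolding is_l2_def
    by (rule summableI_nonneg_bounded) (auto intro: fin)
  then show "(\<Sum>p. (cmod (Sop x p))\<^sup>2) \<le> (\<Sum>n. (cmod (x n))\<^sup>2)"
    unfolding is_l2_def by (rule suminf_le_const) (rule fin)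
qed

lemma Top_eq: "sb n \<le> K \<Longrightarrow> Top z n = (\<Sum>p<K. z p * complex_of_real (g n p))"
proof -
  assume K: "sb n \<le> K"
  have "(\<Sum>p<K. z p * complex_of_real (g n p)) = (\<Sum>p<sb n. z p * complex_of_real (g n p))"
    by (rule sum.mono_neutral_right) (use K supp in auto)
  then show ?thesis unfolding Top_def by simp
qed

lemma real_bessel_fin:
  fixes u :: "nat \<Rightarrow> real"
  assumes u: "summable (\<lambda>p. (u p)\<^sup>2)" and fN: "finite N"
  shows "(\<Sum>n\<in>N. (\<Sum>p<sb n. u p * g n p)\<^sup>2) \<le> (\<Sum>p. (u p)\<^sup>2)"
proof -
  define K where "K = (\<Sum>n\<in>N. sb n)"
  have sbK: "sb n \<le> K" if "n \<in> N" for n unfolding K_def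
    by (rule member_le_sum[OF that _ fN]) auto
  define d where "d n = (\<Sum>p<K. u p * g n p)" for n
  have dn: "n \<in> N \<Longrightarrow> (\<Sum>p<sb n. u p * g n p) = d n" for n
    unfolding d_def by (rule sum.mono_neutral_left) (use sbK supp in auto)
  define D where "D = (\<Sum>n\<in>N. (d n)\<^sup>2)"
  define X where "X = (\<Sum>p<K. (u p)\<^sup>2)"
  have D0: "0 \<le> D" unfolding D_def by (simp add: sum_nonneg)
  have X0: "0 \<le> X" unfolding X_def by (simp add: sum_nonneg)
  have "D = (\<Sum>n\<in>N. d n * (\<Sum>p<K. u p * g n p))"
    unfolding D_def d_def by (simp add: power2_eq_square)
  also have "\<dots> = (\<Sum>p<K. u p * (\<Sum>n\<in>N. d n * g n p))"
    by (simp add: sum_distrib_left sum_distrib_right algebra_simps sum.swap[of _ N])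
  finally have Deq: "D = (\<Sum>p<K. u p * (\<Sum>n\<in>N. d n * g n p))" .
  have "D\<^sup>2 \<le> X * (\<Sum>p<K. (\<Sum>n\<in>N. d n * g n p)\<^sup>2)"
    unfolding Deq X_def by (rule Cauchy_Schwarz_ineq_sum)
  also have "\<dots> \<le> X * D"
    unfolding D_def by (intro mult_left_mono P2 fN X0)
  finally have "D\<^sup>2 \<le> X * D" .
  then have "D \<le> X" using D0 X0
    by (cases "D = 0") (auto simp: power2_eq_square)
  also have "X \<le> (\<Sum>p. (u p)\<^sup>2)" unfolding X_def
    by (rule sum_le_suminf[OF u]) auto
  finally show ?thesis unfolding D_def using dn by simp
qed

lemma T_bound:
  assumes z: "is_l2 z"
  shows "is_l2 (Top z)" "(\<Sum>n. (cmod (Top z n))\<^sup>2) \<le> (\<Sum>p. (cmod (z p))\<^sup>2)"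
proof -
  have fin: "(\<Sum>n<N. (cmod (Top z n))\<^sup>2) \<le> (\<Sum>p. (cmod (z p))\<^sup>2)" for N
  proof -
    have "(\<Sum>n<N. (cmod (Top z n))\<^sup>2) = (\<Sum>n<N. (\<Sum>p<sb n. Re (z p) * g n p)\<^sup>2) + (\<Sum>n<N. (\<Sum>p<sb n. Im (z p) * g n p)\<^sup>2)"
      unfolding Top_def by (simp add: cmod_sq_Re_Im Re_sum Im_sum sum.distrib)
    also have "\<dots> \<le> (\<Sum>p. (Re (z p))\<^sup>2) + (\<Sum>p. (Im (z p))\<^sup>2)"
      by (intro add_mono real_bessel_fin l2_Re l2_Im z) auto
    also have "\<dots> = (\<Sum>p. (cmod (z p))\<^sup>2)" using l2_suminf_Re_Im[OF z] by simp
    finally show ?thesis .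
  qed
  show "is_l2 (Top z)" unfolding is_l2_def
    by (rule summableI_nonneg_bounded) (auto intro: fin)
  then show "(\<Sum>n. (cmod (Top z n))\<^sup>2) \<le> (\<Sum>p. (cmod (z p))\<^sup>2)"
    unfolding is_l2_def by (rule suminf_le_const) (rule fin)
qed

lemma Top_lin: "Top (\<lambda>p. z p + c * z' p) n = Top z n + c * Top z' n"
  unfolding Top_def by (simp add: algebra_simps sum.distrib sum_distrib_left)

lemma Top_diff: "Top (\<lambda>p. z p - z' p) n = Top z n - Top z' n"
  unfolding Top_def by (simp add: algebra_simps sum_subtractf)

lemma Sop_lin: "is_l2 x \<Longrightarrow> is_l2 y \<Longrightarrow> Sop (\<lambda>n. x n + c * y n) p = Sop x p + c * Sop y p"
proof -
  assume x: "is_l2 x" and y: "is_l2 y"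
  have "Sop (\<lambda>n. x n + c * y n) p = (\<Sum>n. x n * complex_of_real (g n p) + c * (y n * complex_of_real (g n p)))"
    unfolding Sop_def by (simp add: algebra_simps)
  also have "\<dots> = Sop x p + (\<Sum>n. c * (y n * complex_of_real (g n p)))"
    unfolding Sop_def
    by (subst suminf_add[symmetric]) (auto intro: summable_Sop x y summable_mult)
  also have "(\<Sum>n. c * (y n * complex_of_real (g n p))) = c * Sop y p"
    unfolding Sop_def by (rule suminf_mult[OF summable_Sop[OF y]])
  finally show ?thesis .
qed

lemma Op_bound:
  assumes x: "is_l2 x" and lam: "\<And>p. \<bar>lam p\<bar> \<le> M"
  shows "is_l2 (Op lam x)" "(\<Sum>n. (cmod (Op lam x n))\<^sup>2) \<le> M\<^sup>2 * (\<Sum>n. (cmod (x n))\<^sup>2)"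
proof -
  note S = S_bound[OF x]
  note L = l2_scale_real[where lam=lam and M=M, OF S(1) lam]
  note T = T_bound[OF L(1)]
  show "is_l2 (Op lam x)" unfolding Op_def by (rule T(1))
  have "(\<Sum>n. (cmod (Op lam x n))\<^sup>2) \<le> M\<^sup>2 * (\<Sum>p. (cmod (Sop x p))\<^sup>2)"
    unfolding Op_def using T(2) L(2) by linarith
  also have "\<dots> \<le> M\<^sup>2 * (\<Sum>n. (cmod (x n))\<^sup>2)"
    by (rule mult_left_mono[OF S(2)]) simp
  finally show "(\<Sum>n. (cmod (Op lam x n))\<^sup>2) \<le> M\<^sup>2 * (\<Sum>n. (cmod (x n))\<^sup>2)" .
qed

lemma Op_lin: "is_l2 x \<Longrightarrow> is_l2 y \<Longrightarrow> Op lam (\<lambda>n. x n + c * y n) = (\<lambda>n. Op lam x n + c * Op lam y n)"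
proof
  fix n assume x: "is_l2 x" and y: "is_l2 y"
  have "Op lam (\<lambda>n. x n + c * y n) n = Top (\<lambda>p. complex_of_real (lam p) * Sop x p + c * (complex_of_real (lam p) * Sop y p)) n"
    unfolding Op_def using Sop_lin[OF x y] by (simp add: algebra_simps)
  also have "\<dots> = Op lam x n + c * Op lam y n" unfolding Op_def by (rule Top_lin)
  finally show "Op lam (\<lambda>n. x n + c * y n) n = Op lam x n + c * Op lam y n" .
qed

lemma Op_bdd:
  assumes lam: "\<And>p. \<bar>lam p\<bar> \<le> M"
  shows "is_bdd_op (Op lam)"
proof -
  have M0: "0 \<le> M" using lam[of 0] by linarith
  have "l2norm (Op lam x) \<le> M * l2norm x" if x: "is_l2 x" for x
  proof -
    have "l2norm (Op lam x) \<le> sqrt (M\<^sup>2 * (\<Sum>n. (cmod (x n))\<^sup>2))"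
      unfolding l2norm_def using Op_bound(2)[where lam=lam and M=M, OF x lam] by (rule real_sqrt_le_mono)
    also have "\<dots> = M * l2norm x" unfolding l2norm_def using M0 by (simp add: real_sqrt_mult)
    finally show ?thesis .
  qed
  moreover have "is_l2 (Op lam x)" if "is_l2 x" for x using Op_bound(1)[where lam=lam and M=M, OF that lam] .
  ultimately show ?thesis unfolding is_bdd_op_def using Op_lin by metis
qed

lemma Op_diff: "(\<lambda>n. Op lam x n - Op lam' x n) = Op (\<lambda>p. lam p - lam' p) x"
  unfolding Op_def by (rule ext, subst Top_diff[symmetric]) (simp add: algebra_simps)

lemma Sop_basis: "Sop (basis_vec n) p = complex_of_real (g n p)"
proof -
  have "Sop (basis_vec n) p = (\<Sum>m\<in>{n}. basis_vec n m * complex_of_real (g m p))"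
    unfolding Sop_def by (rule suminf_finite) (auto simp: basis_vec_def)
  then show ?thesis by (simp add: basis_vec_def)
qed

lemma Op_entry: "Op lam (basis_vec n) n = complex_of_real (\<Sum>p<sb n. lam p * (g n p)\<^sup>2)"
  unfolding Op_def Top_def Sop_basis by (simp add: power2_eq_square mult.assoc)

lemma Op_rank: "Op (\<lambda>p. if p < k then lam p else 0) x = (\<lambda>n. \<Sum>i<k. (complex_of_real (lam i) * Sop x i) * complex_of_real (g n i))"
proof
  fix n
  have "Op (\<lambda>p. if p < k then lam p else 0) x n = (\<Sum>p<sb n + k. (if p < k then complex_of_real (lam p) * Sop x p else 0) * complex_of_real (g n p))"
    unfolding Op_def by (subst Top_eq[of n "sb n + k"]) (auto intro!: sum.cong)
  also have "\<dots> = (\<Sum>p<sb n + k. if p < k then (complex_of_real (lam p) * Sop x p) * complex_of_real (g n p) else 0)"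
    by (rule sum.cong) auto
  also have "\<dots> = (\<Sum>p<k. if p < k then (complex_of_real (lam p) * Sop x p) * complex_of_real (g n p) else 0)"
    by (rule sum.mono_neutral_right) auto
  also have "\<dots> = (\<Sum>i<k. (complex_of_real (lam i) * Sop x i) * complex_of_real (g n i))"
    by (rule sum.cong) auto
  finally show "Op (\<lambda>p. if p < k then lam p else 0) x n = (\<Sum>i<k. (complex_of_real (lam i) * Sop x i) * complex_of_real (g n i))" .
qed

end


lemma CS_series:
  assumes a: "is_l2 a" and b: "is_l2 b"
  shows "summable (\<lambda>p. cmod (a p) * cmod (b p))"
    "(\<Sum>p. cmod (a p) * cmod (b p)) \<le> l2norm a * l2norm b"
proof -
  have fin: "(\<Sum>p<P. cmod (a p) * cmod (b p)) \<le> l2norm a * l2norm b" for P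
  proof -
    have "(\<Sum>p<P. cmod (a p) * cmod (b p))\<^sup>2 \<le> (\<Sum>p<P. (cmod (a p))\<^sup>2) * (\<Sum>p<P. (cmod (b p))\<^sup>2)"
      by (rule Cauchy_Schwarz_ineq_sum)
    also have "\<dots> \<le> (\<Sum>p. (cmod (a p))\<^sup>2) * (\<Sum>p. (cmod (b p))\<^sup>2)"
      using a b unfolding is_l2_def
      by (intro mult_mono sum_le_suminf suminf_nonneg sum_nonneg) auto
    finally have "(\<Sum>p<P. cmod (a p) * cmod (b p)) \<le> sqrt ((\<Sum>p. (cmod (a p))\<^sup>2) * (\<Sum>p. (cmod (b p))\<^sup>2))"
      by (simp add: real_le_rsqrt)
    then show ?thesis unfolding l2norm_def by (simp add: real_sqrt_mult)
  qed
  show s: "summable (\<lambda>p. cmod (a p) * cmod (b p))"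
    by (rule summableI_nonneg_bounded) (auto intro: fin)
  show "(\<Sum>p. cmod (a p) * cmod (b p)) \<le> l2norm a * l2norm b"
    by (rule suminf_le_const[OF s fin])
qed

lemma l2inner_summable:
  assumes a: "is_l2 a" and b: "is_l2 b"
  shows "summable (\<lambda>p. a p * cnj (b p))"
  by (rule summable_norm_cancel, rule summable_comparison_test'[OF CS_series(1)[OF a b], where N=0])
     (simp add: norm_mult)

lemma l2inner_le:
  assumes a: "is_l2 a" and b: "is_l2 b"
  shows "cmod (\<Sum>p. a p * cnj (b p)) \<le> l2norm a * l2norm b"
proof -
  have sn: "summable (\<lambda>p. norm (a p * cnj (b p)))"
    using CS_series(1)[OF a b] by (simp add: norm_mult)
  have "cmod (\<Sum>p. a p * cnj (b p)) \<le> (\<Sum>p. norm (a p * cnj (b p)))"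
    by (rule summable_norm[OF sn])
  also have "\<dots> = (\<Sum>p. cmod (a p) * cmod (b p))" by (simp add: norm_mult)
  also have "\<dots> \<le> l2norm a * l2norm b" by (rule CS_series(2)[OF a b])
  finally show ?thesis .
qed

lemma l2_trunc: "is_l2 x \<Longrightarrow> is_l2 (\<lambda>n. if P n then x n else 0)"
  unfolding is_l2_def
  by (rule summable_comparison_test'[where N=0]) auto

lemma tail_to_0:
  assumes x: "is_l2 x"
  shows "(\<lambda>N. \<Sum>n. (cmod (if N \<le> n then x n else 0))\<^sup>2) \<longlonglongrightarrow> 0"
proof -
  have s: "summable (\<lambda>n. (cmod (x n))\<^sup>2)" using x unfolding is_l2_def .
  have eq: "(\<Sum>n. (cmod (if N \<le> n then x n else 0))\<^sup>2) = (\<Sum>n. (cmod (x n))\<^sup>2) - (\<Sum>n<N. (cmod (x n))\<^sup>2)" for N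
  proof -
    have "(\<lambda>n. (cmod (if N \<le> n then x n else 0))\<^sup>2) = (\<lambda>n. (cmod (x n))\<^sup>2 - (if n < N then (cmod (x n))\<^sup>2 else 0))"
      by (auto simp: fun_eq_iff)
    moreover have "(\<Sum>n. (if n < N then (cmod (x n))\<^sup>2 else 0)) = (\<Sum>n<N. (cmod (x n))\<^sup>2)"
      by (subst suminf_finite[of "{..<N}"]) auto
    moreover have "summable (\<lambda>n. (if n < N then (cmod (x n))\<^sup>2 else 0))"
      by (rule summable_finite[of "{..<N}"]) auto
    ultimately show ?thesis using suminf_diff[OF s, of "\<lambda>n. (if n < N then (cmod (x n))\<^sup>2 else 0)"] by simp
  qed
  have "(\<lambda>N. (\<Sum>n. (cmod (x n))\<^sup>2) - (\<Sum>n<N. (cmod (x n))\<^sup>2)) \<longlonglongrightarrow> (\<Sum>n. (cmod (x n))\<^sup>2) - (\<Sum>n. (cmod (x n))\<^sup>2)"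
    by (intro tendsto_diff tendsto_const summable_LIMSEQ s)
  then show ?thesis unfolding eq by simp
qed

context fam begin

lemma Sop_trunc_fin:
  "Sop (\<lambda>n. if n < N then x n else 0) p = (\<Sum>n<N. x n * complex_of_real (g n p))"
  unfolding Sop_def by (subst suminf_finite[of "{..<N}"]) auto

lemma adjoint:
  assumes w: "is_l2 w" and x: "is_l2 x"
  shows "(\<Sum>n. Top w n * cnj (x n)) = (\<Sum>p. w p * cnj (Sop x p))"
proof -
  define SN where "SN N p = (\<Sum>n<N. x n * complex_of_real (g n p))" for N p
  have Tw: "is_l2 (Top w)" using T_bound(1)[OF w] .
  have Sx: "is_l2 (Sop x)" using S_bound(1)[OF x] .
  have i: "(\<Sum>n<N. Top w n * cnj (x n)) = (\<Sum>p. w p * cnj (SN N p))" for N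
  proof -
    define K where "K = (\<Sum>n<N. sb n)"
    have sbK: "sb n \<le> K" if "n < N" for n unfolding K_def
      by (rule member_le_sum) (use that in auto)
    have "(\<Sum>n<N. Top w n * cnj (x n)) = (\<Sum>n<N. (\<Sum>p<K. w p * complex_of_real (g n p)) * cnj (x n))"
      by (rule sum.cong) (auto simp: Top_eq[OF sbK])
    also have "\<dots> = (\<Sum>p<K. w p * cnj (SN N p))"
      unfolding SN_def by (simp add: sum_distrib_left sum_distrib_right sum.swap[of _ "{..<N}"] algebra_simps)
    also have "\<dots> = (\<Sum>p. w p * cnj (SN N p))"
    proof (rule suminf_finite[symmetric])
      fix p assume "p \<notin> {..<K}"
      have "g n p = 0" if "n < N" for n using supp[of n p] sbK[OF that] \<open>p \<notin> {..<K}\<close> by auto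
      then have "SN N p = 0" unfolding SN_def by (auto intro!: sum.neutral)
      then show "w p * cnj (SN N p) = 0" by simp
    qed simp
    finally show ?thesis .
  qed
  have ii: "(\<lambda>N. \<Sum>n<N. Top w n * cnj (x n)) \<longlonglongrightarrow> (\<Sum>n. Top w n * cnj (x n))"
    by (rule summable_LIMSEQ[OF l2inner_summable[OF Tw x]])
  have iii: "(\<lambda>N. \<Sum>p. w p * cnj (SN N p)) \<longlonglongrightarrow> (\<Sum>p. w p * cnj (Sop x p))"
  proof -
    define xt where "xt N n = (if N \<le> n then x n else 0)" for N n
    define xh where "xh N n = (if n < N then x n else 0)" for N n
    have xt: "is_l2 (xt N)" for N unfolding xt_def by (rule l2_trunc[OF x])
    have xh: "is_l2 (xh N)" for N unfolding xh_def by (rule l2_trunc[OF x])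
    have split: "Sop x p = SN N p + Sop (xt N) p" for N p
    proof -
      have "x = (\<lambda>n. xh N n + 1 * xt N n)" unfolding xh_def xt_def by auto
      then have "Sop x p = Sop (xh N) p + 1 * Sop (xt N) p"
        using Sop_lin[OF xh xt] by metis
      then show ?thesis unfolding xh_def SN_def Sop_trunc_fin by simp
    qed
    have diff: "(\<Sum>p. w p * cnj (Sop x p)) - (\<Sum>p. w p * cnj (SN N p)) = (\<Sum>p. w p * cnj (Sop (xt N) p))" for N
    proof -
      have SNl2: "is_l2 (SN N)"
      proof -
        have "SN N = Sop (xh N)" unfolding SN_def xh_def by (rule ext) (simp add: Sop_trunc_fin)
        then show ?thesis using S_bound(1)[OF xh] by simp
      qed
      have "(\<Sum>p. w p * cnj (Sop x p)) = (\<Sum>p. w p * cnj (SN N p) + w p * cnj (Sop (xt N) p))"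
        by (simp add: split[of _ N] algebra_simps)
      also have "\<dots> = (\<Sum>p. w p * cnj (SN N p)) + (\<Sum>p. w p * cnj (Sop (xt N) p))"
        by (rule suminf_add[symmetric]) (auto intro: l2inner_summable w SNl2 S_bound(1)[OF xt])
      finally show ?thesis by simp
    qed
    have bnd: "cmod ((\<Sum>p. w p * cnj (SN N p)) - (\<Sum>p. w p * cnj (Sop x p)))
          \<le> l2norm w * sqrt (\<Sum>n. (cmod (xt N n))\<^sup>2)" for N
    proof -
      have "cmod ((\<Sum>p. w p * cnj (SN N p)) - (\<Sum>p. w p * cnj (Sop x p))) = cmod (\<Sum>p. w p * cnj (Sop (xt N) p))"
        using diff[of N] by (metis norm_minus_commute)
      also have "\<dots> \<le> l2norm w * l2norm (Sop (xt N))"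
        by (rule l2inner_le[OF w S_bound(1)[OF xt]])
      also have "\<dots> \<le> l2norm w * sqrt (\<Sum>n. (cmod (xt N n))\<^sup>2)"
        unfolding l2norm_def
        by (intro mult_left_mono real_sqrt_le_mono S_bound(2)[OF xt]) (use w in \<open>auto simp: l2norm_def is_l2_def intro: suminf_nonneg\<close>)
      finally show ?thesis .
    qed
    have lim0: "(\<lambda>N. l2norm w * sqrt (\<Sum>n. (cmod (xt N n))\<^sup>2)) \<longlonglongrightarrow> 0"
    proof -
      have "(\<lambda>N. l2norm w * sqrt (\<Sum>n. (cmod (xt N n))\<^sup>2)) \<longlonglongrightarrow> l2norm w * sqrt 0"
        unfolding xt_def by (intro tendsto_mult tendsto_const tendsto_real_sqrt tail_to_0[OF x])
      then show ?thesis by simp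
    qed
    have "(\<lambda>N. (\<Sum>p. w p * cnj (SN N p)) - (\<Sum>p. w p * cnj (Sop x p))) \<longlonglongrightarrow> 0"
      by (rule Lim_null_comparison[OF _ lim0]) (use bnd in auto)
    then show ?thesis by (simp add: LIM_zero_iff)
  qed
  have "(\<lambda>N. \<Sum>n<N. Top w n * cnj (x n)) \<longlonglongrightarrow> (\<Sum>p. w p * cnj (Sop x p))"
    using iii unfolding i[symmetric] .
  then show ?thesis using ii LIMSEQ_unique by blast
qed

lemma Op_pos:
  assumes x: "is_l2 x" and lam: "\<And>p. 0 \<le> lam p" "\<And>p. lam p \<le> M"
  shows "Im (l2inner (Op lam x) x) = 0 \<and> 0 \<le> Re (l2inner (Op lam x) x)"
proof -
  have lamb: "\<bar>lam p\<bar> \<le> M" for p using lam[of p] by auto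
  note L = l2_scale_real[where lam=lam and M=M, OF S_bound(1)[OF x] lamb]
  have eq: "l2inner (Op lam x) x = (\<Sum>p. complex_of_real (lam p) * Sop x p * cnj (Sop x p))"
    unfolding l2inner_def Op_def by (rule adjoint[OF L(1) x])
  have s: "summable (\<lambda>p. lam p * (cmod (Sop x p))\<^sup>2)"
  proof -
    have "summable (\<lambda>p. M * (cmod (Sop x p))\<^sup>2)"
      using S_bound(1)[OF x] unfolding is_l2_def by (rule summable_mult)
    then show ?thesis
      by (rule summable_comparison_test'[where N=0]) (use lam in \<open>auto intro!: mult_right_mono\<close>)
  qed
  have "(\<lambda>p. complex_of_real (lam p) * Sop x p * cnj (Sop x p)) = (\<lambda>p. complex_of_real (lam p * (cmod (Sop x p))\<^sup>2))"
    by (auto simp: fun_eq_iff mult.assoc complex_norm_square[symmetric])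
  moreover have "complex_of_real (\<Sum>p. lam p * (cmod (Sop x p))\<^sup>2) = (\<Sum>p. complex_of_real (lam p * (cmod (Sop x p))\<^sup>2))"
    by (rule suminf_of_real[OF s])
  ultimately have "l2inner (Op lam x) x = complex_of_real (\<Sum>p. lam p * (cmod (Sop x p))\<^sup>2)"
    unfolding eq by simp
  moreover have "0 \<le> (\<Sum>p. lam p * (cmod (Sop x p))\<^sup>2)"
    by (rule suminf_nonneg[OF s]) (use lam in auto)
  ultimately show ?thesis by simp
qed

end


lemma l2norm_nonneg: "is_l2 x \<Longrightarrow> 0 \<le> l2norm x"
  unfolding l2norm_def is_l2_def by (simp add: suminf_nonneg)

lemma l2_zero: "is_l2 (\<lambda>n. 0)" unfolding is_l2_def by simp

lemma l2norm_zero: "l2norm (\<lambda>n. 0) = 0" unfolding l2norm_def by simp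

lemma minkowski:
  assumes a: "is_l2 a" and b: "is_l2 b"
  shows "l2norm (\<lambda>n. a n - b n) \<le> l2norm a + l2norm b"
proof -
  have fin: "(\<Sum>p<P. (cmod (a p - b p))\<^sup>2) \<le> (l2norm a + l2norm b)\<^sup>2" for P
  proof -
    have "L2_set (\<lambda>p. cmod (a p - b p)) {..<P} \<le> L2_set (\<lambda>p. cmod (a p) + cmod (b p)) {..<P}"
      by (rule L2_set_mono) (auto intro: norm_triangle_ineq4)
    also have "\<dots> \<le> L2_set (\<lambda>p. cmod (a p)) {..<P} + L2_set (\<lambda>p. cmod (b p)) {..<P}"
      by (rule L2_set_triangle_ineq)
    also have "L2_set (\<lambda>p. cmod (a p)) {..<P} \<le> l2norm a"
      unfolding L2_set_def l2norm_def using a unfolding is_l2_def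
      by (intro real_sqrt_le_mono sum_le_suminf) auto
    also have "L2_set (\<lambda>p. cmod (b p)) {..<P} \<le> l2norm b"
      unfolding L2_set_def l2norm_def using b unfolding is_l2_def
      by (intro real_sqrt_le_mono sum_le_suminf) auto
    finally have "sqrt (\<Sum>p<P. (cmod (a p - b p))\<^sup>2) \<le> l2norm a + l2norm b"
      unfolding L2_set_def by simp
    moreover have A0: "0 \<le> (\<Sum>p<P. (cmod (a p - b p))\<^sup>2)" by (simp add: sum_nonneg)
    ultimately have "(sqrt (\<Sum>p<P. (cmod (a p - b p))\<^sup>2))\<^sup>2 \<le> (l2norm a + l2norm b)\<^sup>2"
      by (intro power_mono) auto
    then show ?thesis using A0 by simp
  qed
  have s: "summable (\<lambda>p. (cmod (a p - b p))\<^sup>2)"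
    by (rule summableI_nonneg_bounded) (auto intro: fin)
  have "(\<Sum>p. (cmod (a p - b p))\<^sup>2) \<le> (l2norm a + l2norm b)\<^sup>2"
    by (rule suminf_le_const[OF s fin])
  then have "l2norm (\<lambda>n. a n - b n) \<le> sqrt ((l2norm a + l2norm b)\<^sup>2)"
    unfolding l2norm_def by (rule real_sqrt_le_mono)
  also have "\<dots> = l2norm a + l2norm b"
    using l2norm_nonneg[OF a] l2norm_nonneg[OF b] by simp
  finally show ?thesis .
qed

lemma op_norm_le:
  assumes "\<And>x. is_l2 x \<Longrightarrow> l2norm x \<le> 1 \<Longrightarrow> l2norm (T x) \<le> M"
  shows "op_norm T \<le> M"
  unfolding op_norm_def
proof (rule cSup_least)
  have "l2norm (T (\<lambda>n. 0)) \<in> {l2norm (T x) |x. is_l2 x \<and> l2norm x \<le> 1}"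
    by (rule CollectI, rule exI[of _ "\<lambda>n. 0"]) (simp add: l2_zero l2norm_zero)
  then show "{l2norm (T x) |x. is_l2 x \<and> l2norm x \<le> 1} \<noteq> {}" by blast
qed (use assms in auto)

lemma bdd_op_bound:
  assumes "is_bdd_op V"
  obtains C where "0 \<le> C" "\<And>x. is_l2 x \<Longrightarrow> l2norm x \<le> 1 \<Longrightarrow> l2norm (V x) \<le> C"
proof -
  obtain C where C: "\<And>x. is_l2 x \<Longrightarrow> l2norm (V x) \<le> C * l2norm x"
    using assms unfolding is_bdd_op_def by blast
  have "l2norm (V x) \<le> \<bar>C\<bar>" if "is_l2 x" "l2norm x \<le> 1" for x
  proof -
    have "l2norm (V x) \<le> C * l2norm x" using C that by blast
    also have "\<dots> \<le> \<bar>C\<bar> * l2norm x" using l2norm_nonneg[OF that(1)]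
      by (intro mult_right_mono) auto
    also have "\<dots> \<le> \<bar>C\<bar>" using that l2norm_nonneg[OF that(1)]
      by (simp add: mult_left_le)
    finally show ?thesis .
  qed
  then show ?thesis using that[of "\<bar>C\<bar>"] by auto
qed

lemma op_norm_diff_nonneg:
  assumes V: "is_bdd_op V" and R: "is_bdd_op R"
  shows "0 \<le> op_norm (\<lambda>x n. V x n - R x n)"
proof -
  obtain C1 where C1: "0 \<le> C1" "\<And>x. is_l2 x \<Longrightarrow> l2norm x \<le> 1 \<Longrightarrow> l2norm (V x) \<le> C1"
    using bdd_op_bound[OF V] by blast
  obtain C2 where C2: "0 \<le> C2" "\<And>x. is_l2 x \<Longrightarrow> l2norm x \<le> 1 \<Longrightarrow> l2norm (R x) \<le> C2"
    using bdd_op_bound[OF R] by blast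
  have Vl2: "is_l2 (V x)" if "is_l2 x" for x using V that unfolding is_bdd_op_def by blast
  have Rl2: "is_l2 (R x)" if "is_l2 x" for x using R that unfolding is_bdd_op_def by blast
  let ?S = "{l2norm ((\<lambda>x n. V x n - R x n) x) |x. is_l2 x \<and> l2norm x \<le> 1}"
  have bdd: "bdd_above ?S"
  proof (rule bdd_aboveI)
    fix y assume "y \<in> ?S"
    then obtain x where x: "is_l2 x" "l2norm x \<le> 1" and y: "y = l2norm (\<lambda>n. V x n - R x n)" by auto
    have "y \<le> l2norm (V x) + l2norm (R x)" unfolding y by (rule minkowski[OF Vl2[OF x(1)] Rl2[OF x(1)]])
    also have "\<dots> \<le> C1 + C2" using C1(2)[OF x] C2(2)[OF x] by simp
    finally show "y \<le> C1 + C2" .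
  qed
  have mem: "l2norm (\<lambda>n. V (\<lambda>n. 0) n - R (\<lambda>n. 0) n) \<in> ?S"
    by (rule CollectI, rule exI[of _ "\<lambda>n. 0"]) (simp add: l2_zero l2norm_zero)
  have "0 \<le> l2norm (\<lambda>n. V (\<lambda>n. 0) n - R (\<lambda>n. 0) n)"
  proof (rule l2norm_nonneg)
    have "is_l2 (\<lambda>n. V (\<lambda>n. 0) n + (-1) * R (\<lambda>n. 0) n)"
      using l2_lin[OF Vl2[OF l2_zero] Rl2[OF l2_zero]] .
    then show "is_l2 (\<lambda>n. V (\<lambda>n. 0) n - R (\<lambda>n. 0) n)" by simp
  qed
  also have "\<dots> \<le> Sup ?S" by (rule cSup_upper[OF mem bdd])
  finally show ?thesis unfolding op_norm_def .
qed

lemma sing_val_le: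
  assumes V: "is_bdd_op V" and R: "is_bdd_op R" and rk: "rank_le R k"
    and b: "\<And>x. is_l2 x \<Longrightarrow> l2norm x \<le> 1 \<Longrightarrow> l2norm (\<lambda>n. V x n - R x n) \<le> M"
  shows "sing_val k V \<le> M"
proof -
  let ?X = "{op_norm (\<lambda>x n. V x n - R x n) | R. is_bdd_op R \<and> rank_le R k}"
  have le: "op_norm (\<lambda>x n. V x n - R x n) \<le> M" by (rule op_norm_le) (use b in simp)
  have mem: "op_norm (\<lambda>x n. V x n - R x n) \<in> ?X" using R rk by blast
  have bdd: "bdd_below ?X"
  proof (rule bdd_belowI)
    fix y assume "y \<in> ?X"
    then obtain R' where "is_bdd_op R'" "y = op_norm (\<lambda>x n. V x n - R' x n)" by blast
    then show "0 \<le> y" using op_norm_diff_nonneg[OF V] by simp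
  qed
  have "Inf ?X \<le> op_norm (\<lambda>x n. V x n - R x n)" by (rule cInf_lower[OF mem bdd])
  then show ?thesis unfolding sing_val_def using le by linarith
qed



lemma sum_removal:
  fixes c :: "nat \<Rightarrow> real"
  shows "(\<Sum>i<m. if i < r then c i else c (Suc i)) = (if m \<le> r then (\<Sum>i<m. c i) else (\<Sum>i<Suc m. c i) - c r)"
proof (induction m)
  case 0 then show ?case by simp
next
  case (Suc m)
  then show ?case by (cases "Suc m \<le> r"; cases "m = r") (auto simp: not_le le_Suc_eq)
qed

lemma maj_step:
  fixes c :: "nat \<Rightarrow> real" and bs :: "nat \<Rightarrow> real"
  assumes big: "\<And>i. i < r \<Longrightarrow> \<beta> \<le> c i"
    and bs0: "bs 0 = \<beta>" and bsdec: "\<And>i. bs (Suc i) \<le> bs i"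
    and cases: "c r \<le> \<beta> \<or> (\<forall>i. r < i \<longrightarrow> c i \<le> w)"
    and old: "\<And>k. (\<Sum>i<Suc k. bs i) \<le> max (\<Sum>i<Suc k. c i) (w + (\<Sum>i<k. c i))"
  shows "(\<Sum>i<Suc k. bs (Suc i)) \<le> max (\<Sum>i<Suc k. if i < r then c i else c (Suc i))
            (w + c r - \<beta> + (\<Sum>i<k. if i < r then c i else c (Suc i)))"
proof -
  have bsle: "bs i \<le> \<beta>" for i
  proof (induction i)
    case 0 then show ?case using bs0 by simp
  next
    case (Suc i) then show ?case using bsdec[of i] by linarith
  qed
  have Sle: "(\<Sum>i<Suc k. bs (Suc i)) \<le> real (Suc k) * \<beta>"
  proof -
    have "(\<Sum>i<Suc k. bs (Suc i)) \<le> (\<Sum>i<Suc k. \<beta>)" by (rule sum_mono) (rule bsle)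
    then show ?thesis by simp
  qed
  have Seq: "(\<Sum>i<Suc k. bs (Suc i)) = (\<Sum>i<Suc (Suc k). bs i) - \<beta>"
    using bs0 by (simp only: sum.lessThan_Suc_shift)
  show ?thesis
  proof (cases "Suc k \<le> r")
    case True
    have "real (Suc k) * \<beta> = (\<Sum>i<Suc k. \<beta>)" by simp
    also have "\<dots> \<le> (\<Sum>i<Suc k. c i)" by (rule sum_mono) (use True big in auto)
    finally have "(\<Sum>i<Suc k. bs (Suc i)) \<le> (\<Sum>i<Suc k. if i < r then c i else c (Suc i))"
      using Sle True by (simp add: sum_removal)
    then show ?thesis by linarith
  next
    case False
    then have kr: "r \<le> k" by simp
    have e1: "(\<Sum>i<Suc k. if i < r then c i else c (Suc i)) = (\<Sum>i<Suc (Suc k). c i) - c r"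
      using False by (simp add: sum_removal)
    have e2: "(\<Sum>i<k. if i < r then c i else c (Suc i)) = (\<Sum>i<Suc k. c i) - c r"
    proof (cases "k \<le> r")
      case True then have "k = r" using kr by simp
      then show ?thesis by (simp add: sum_removal)
    next
      case False then show ?thesis by (simp add: sum_removal)
    qed
    have o: "(\<Sum>i<Suc (Suc k). bs i) \<le> max (\<Sum>i<Suc (Suc k). c i) (w + (\<Sum>i<Suc k. c i))"
      by (rule old)
    from cases show ?thesis
    proof
      assume "c r \<le> \<beta>"
      then show ?thesis using o Seq e1 e2 by (simp add: max_def split: if_splits)
    next
      assume h: "\<forall>i. r < i \<longrightarrow> c i \<le> w"
      then have "c (Suc k) \<le> w" using kr by simp
      then have "(\<Sum>i<Suc (Suc k). c i) \<le> w + (\<Sum>i<Suc k. c i)" by simp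
      then show ?thesis using o Seq e1 e2 by (simp add: max_def split: if_splits)
    qed
  qed
qed


lemma rot_alg:
  fixes w al be :: real
  assumes h: "(al \<le> be \<and> be \<le> w) \<or> (w < be \<and> be < al)"
  defines "cs \<equiv> (if w = al then 1 else sqrt ((be - al) / (w - al)))"
    and "sn \<equiv> (if w = al then 0 else sqrt ((w - be) / (w - al)))"
  shows "cs\<^sup>2 + sn\<^sup>2 = 1" "cs\<^sup>2 * w + sn\<^sup>2 * al = be" "sn\<^sup>2 * w + cs\<^sup>2 * al = w + al - be"
proof -
  show "cs\<^sup>2 + sn\<^sup>2 = 1" "cs\<^sup>2 * w + sn\<^sup>2 * al = be" "sn\<^sup>2 * w + cs\<^sup>2 * al = w + al - be"
  proof (atomize (full), cases "w = al")
    case True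
    then have "be = w" using h by auto
    then show "cs\<^sup>2 + sn\<^sup>2 = 1 \<and> cs\<^sup>2 * w + sn\<^sup>2 * al = be \<and> sn\<^sup>2 * w + cs\<^sup>2 * al = w + al - be"
      using True unfolding cs_def sn_def by simp
  next
    case False
    have n1: "0 \<le> (be - al) / (w - al)" using h False
      by (auto intro: divide_nonneg_nonneg divide_nonpos_nonpos)
    have n2: "0 \<le> (w - be) / (w - al)" using h False
      by (auto intro: divide_nonneg_nonneg divide_nonpos_nonpos)
    have c2: "cs\<^sup>2 = (be - al) / (w - al)" unfolding cs_def using False n1 by simp
    have s2: "sn\<^sup>2 = (w - be) / (w - al)" unfolding sn_def using False n2 by simp
    have d: "w - al \<noteq> 0" using False by simp
    have e1: "(be - al) / (w - al) + (w - be) / (w - al) = 1"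
    proof -
      have "(be - al) / (w - al) + (w - be) / (w - al) = ((be - al) + (w - be)) / (w - al)"
        by (rule add_divide_distrib[symmetric])
      also have "\<dots> = 1" using d by simp
      finally show ?thesis .
    qed
    have e2: "(be - al) / (w - al) * w + (w - be) / (w - al) * al = be"
    proof -
      have num: "(be - al) * w + (w - be) * al = be * (w - al)" by (simp add: algebra_simps)
      have "(be - al) / (w - al) * w + (w - be) / (w - al) * al = ((be - al) * w + (w - be) * al) / (w - al)"
        by (simp only: times_divide_eq_left add_divide_distrib)
      also have "\<dots> = be" unfolding num using d by simp
      finally show ?thesis .
    qed
    have e3: "(w - be) / (w - al) * w + (be - al) / (w - al) * al = w + al - be"
    proof -
      have num: "(w - be) * w + (be - al) * al = (w + al - be) * (w - al)" by (simp add: algebra_simps power2_eq_square)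
      have "(w - be) / (w - al) * w + (be - al) / (w - al) * al = ((w - be) * w + (be - al) * al) / (w - al)"
        by (simp only: times_divide_eq_left add_divide_distrib)
      also have "\<dots> = w + al - be" unfolding num using d by simp
      finally show ?thesis .
    qed
    show "cs\<^sup>2 + sn\<^sup>2 = 1 \<and> cs\<^sup>2 * w + sn\<^sup>2 * al = be \<and> sn\<^sup>2 * w + cs\<^sup>2 * al = w + al - be"
      unfolding c2 s2 using e1 e2 e3 by simp
  qed
qed

definition dl :: "nat \<Rightarrow> nat \<Rightarrow> real" where "dl q p = (if p = q then 1 else 0)"

lemma sum_dl:
  fixes u wt :: "nat \<Rightarrow> real"
  assumes "u q = 0" "q < M"
  shows "(\<Sum>p<M. wt p * (x * u p + y * dl q p)\<^sup>2) = x\<^sup>2 * (\<Sum>p<M. wt p * (u p)\<^sup>2) + y\<^sup>2 * wt q"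
proof -
  have "(\<Sum>p<M. wt p * (x * u p + y * dl q p)\<^sup>2) = (\<Sum>p<M. x\<^sup>2 * (wt p * (u p)\<^sup>2) + y\<^sup>2 * (wt p * dl q p))"
    by (rule sum.cong) (use assms in \<open>auto simp: dl_def power2_eq_square algebra_simps\<close>)
  also have "\<dots> = x\<^sup>2 * (\<Sum>p<M. wt p * (u p)\<^sup>2) + y\<^sup>2 * (\<Sum>p<M. wt p * dl q p)"
    by (simp add: sum.distrib sum_distrib_left)
  also have "(\<Sum>p<M. wt p * dl q p) = wt q"
    using assms(2) by (simp add: dl_def if_distrib sum.delta cong: if_cong)
  finally show ?thesis .
qed

datatype cst = CS (cw: real) (cG: "nat list") (cR: nat) (cf: "nat \<Rightarrow> real")

definition csf :: "real \<Rightarrow> real \<Rightarrow> real \<Rightarrow> real" where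
  "csf w al be = (if w = al then 1 else sqrt ((be - al) / (w - al)))"
definition snf :: "real \<Rightarrow> real \<Rightarrow> real \<Rightarrow> real" where
  "snf w al be = (if w = al then 0 else sqrt ((w - be) / (w - al)))"

definition usedset :: "cst \<Rightarrow> nat set" where
  "usedset s = {p. p < cR s \<and> p \<notin> set (cG s)}"

locale chain =
  fixes a b :: "nat \<Rightarrow> real"
  assumes a_dec: "\<And>i j. i \<le> j \<Longrightarrow> a j \<le> a i" and a_nn: "\<And>i. 0 \<le> a i"
    and a_small: "\<And>e. 0 < e \<Longrightarrow> \<exists>q. a q \<le> e"
    and b_dec: "\<And>i j. i \<le> j \<Longrightarrow> b j \<le> b i" and b_nn: "\<And>i. 0 \<le> b i"
    and maj: "\<And>n. (\<Sum>i<Suc n. b i) \<le> (\<Sum>i<Suc n. a i)"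
begin

definition qsel :: "real \<Rightarrow> cst \<Rightarrow> nat" where
  "qsel be s = (if be \<le> cw s then (LEAST q. cR s \<le> q \<and> a q \<le> be) else last (cG s))"

definition step :: "real \<Rightarrow> cst \<Rightarrow> cst" where
  "step be s = (if be \<le> 0 then s else
     CS (cw s + a (qsel be s) - be)
        (if be \<le> cw s then cG s @ [cR s..<qsel be s] else butlast (cG s))
        (if be \<le> cw s then Suc (qsel be s) else cR s)
        (\<lambda>p. (- snf (cw s) (a (qsel be s)) be) * cf s p + csf (cw s) (a (qsel be s)) be * dl (qsel be s) p))"

definition colv :: "real \<Rightarrow> cst \<Rightarrow> nat \<Rightarrow> real" where
  "colv be s = (if be \<le> 0 then (\<lambda>p. 0) else
     (\<lambda>p. csf (cw s) (a (qsel be s)) be * cf s p + snf (cw s) (a (qsel be s)) be * dl (qsel be s) p))"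

primrec st :: "nat \<Rightarrow> cst" where
  "st 0 = CS (a 0) [] 1 (dl 0)"
| "st (Suc j) = step (b j) (st j)"

definition col :: "nat \<Rightarrow> nat \<Rightarrow> real" where
  "col j = colv (b j) (st j)"

definition cseq :: "cst \<Rightarrow> nat \<Rightarrow> real" where
  "cseq s i = (if i < length (cG s) then a (cG s ! i) else a (cR s + (i - length (cG s))))"

definition cinv :: "nat \<Rightarrow> bool" where
  "cinv j \<longleftrightarrow> (\<forall>g \<in> set (cG (st j)). b j < a g) \<and> a (cR (st j)) \<le> cw (st j) \<and>
     distinct (cG (st j)) \<and> set (cG (st j)) \<subseteq> {..<cR (st j)} \<and>
     (\<forall>k. (\<Sum>i<Suc k. b (j+i)) \<le> max (\<Sum>i<Suc k. cseq (st j) i) (cw (st j) + (\<Sum>i<k. cseq (st j) i)))"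

lemma inv0: "cinv 0"
proof -
  have "(\<Sum>i<Suc k. b i) \<le> max (\<Sum>i<Suc k. a (Suc i)) (a 0 + (\<Sum>i<k. a (Suc i)))" for k
  proof -
    have "(\<Sum>i<Suc k. a i) = a 0 + (\<Sum>i<k. a (Suc i))" by (simp only: sum.lessThan_Suc_shift)
    then show ?thesis using maj[of k] by simp
  qed
  then show ?thesis unfolding cinv_def cseq_def by (simp add: a_dec)
qed

lemma case1_q:
  assumes "0 < be" "be \<le> cw s"
  shows "cR s \<le> qsel be s" "a (qsel be s) \<le> be" "\<And>q'. cR s \<le> q' \<Longrightarrow> q' < qsel be s \<Longrightarrow> be < a q'"
proof -
  obtain q0 where q0: "a q0 \<le> be" using a_small[OF assms(1)] by blast
  have ex: "cR s \<le> max q0 (cR s) \<and> a (max q0 (cR s)) \<le> be"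
    using a_dec[of q0 "max q0 (cR s)"] q0 by auto
  have eq: "qsel be s = (LEAST q. cR s \<le> q \<and> a q \<le> be)" unfolding qsel_def using assms by simp
  show "cR s \<le> qsel be s" "a (qsel be s) \<le> be" unfolding eq using LeastI[of "\<lambda>q. cR s \<le> q \<and> a q \<le> be" "max q0 (cR s)", OF ex] by auto
  show "\<And>q'. cR s \<le> q' \<Longrightarrow> q' < qsel be s \<Longrightarrow> be < a q'"
    unfolding eq using not_less_Least by fastforce
qed


lemma cseq_case1:
  assumes "cR s \<le> q" "cG s' = cG s @ [cR s..<q]" "cR s' = Suc q"
  shows "cseq s' i = (if i < length (cG s) + (q - cR s) then cseq s i else cseq s (Suc i))"
proof -
  consider "i < length (cG s)" | "length (cG s) \<le> i" "i < length (cG s) + (q - cR s)" | "length (cG s) + (q - cR s) \<le> i"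
    by linarith
  then show ?thesis
  proof cases
    case 1 then show ?thesis unfolding cseq_def using assms by (auto simp: nth_append)
  next
    case 2 then show ?thesis unfolding cseq_def using assms by (simp add: nth_append)
  next
    case 3
    have c1: "cseq s' i = a (Suc q + (i - (length (cG s) + (q - cR s))))"
      unfolding cseq_def using assms 3 by simp
    have c2: "cseq s (Suc i) = a (cR s + (Suc i - length (cG s)))"
      unfolding cseq_def using 3 by simp
    have idx: "Suc q + (i - (length (cG s) + (q - cR s))) = cR s + (Suc i - length (cG s))"
      using 3 assms(1) by simp
    have nlt: "\<not> (i < length (cG s) + (q - cR s))" using 3 by simp
    show ?thesis by (simp only: if_not_P[OF nlt] c1 c2 idx)
  qed
qed

lemma cseq_case2:
  assumes "cG s \<noteq> []" "cG s' = butlast (cG s)" "cR s' = cR s"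
  shows "cseq s' i = (if i < length (cG s) - 1 then cseq s i else cseq s (Suc i))"
proof (cases "i < length (cG s) - 1")
  case True then show ?thesis unfolding cseq_def using assms by (auto simp: nth_butlast)
next
  case False
  have c1: "cseq s' i = a (cR s + (i - (length (cG s) - 1)))" unfolding cseq_def using assms False by simp
  have c2: "cseq s (Suc i) = a (cR s + (Suc i - length (cG s)))" unfolding cseq_def using False assms(1) by (cases "cG s") auto
  have idx: "i - (length (cG s) - 1) = Suc i - length (cG s)" using False assms(1) by (cases "cG s") auto
  show ?thesis by (simp only: if_not_P[OF False] c1 c2 idx)
qed

lemma case2_q:
  assumes iv: "cinv j" and pos: "0 < b j" and c2: "\<not> b j \<le> cw (st j)"
  shows "cG (st j) \<noteq> []" "qsel (b j) (st j) = last (cG (st j))"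
    "qsel (b j) (st j) \<in> set (cG (st j))" "b j < a (qsel (b j) (st j))"
proof -
  have m: "b j \<le> max (cseq (st j) 0) (cw (st j))"
    using iv unfolding cinv_def by (metis (no_types) add.right_neutral lessThan_0 lessThan_Suc sum.empty sum.insert finite.emptyI empty_iff add.commute)
  show ne: "cG (st j) \<noteq> []"
  proof
    assume "cG (st j) = []"
    then have "cseq (st j) 0 = a (cR (st j))" unfolding cseq_def by simp
    then show False using m c2 iv unfolding cinv_def by (simp add: max_def split: if_splits)
  qed
  show q: "qsel (b j) (st j) = last (cG (st j))" unfolding qsel_def using c2 by simp
  show "qsel (b j) (st j) \<in> set (cG (st j))" unfolding q using ne by simp
  then show "b j < a (qsel (b j) (st j))" using iv unfolding cinv_def by blast
qed


lemma st_Suc_inactive: "\<not> 0 < b j \<Longrightarrow> st (Suc j) = st j"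
  by (simp add: step_def)

lemma st_Suc_c1:
  assumes "0 < b j" "b j \<le> cw (st j)"
  shows "cG (st (Suc j)) = cG (st j) @ [cR (st j)..<qsel (b j) (st j)]"
    "cR (st (Suc j)) = Suc (qsel (b j) (st j))"
    "cw (st (Suc j)) = cw (st j) + a (qsel (b j) (st j)) - b j"
  using assms by (simp_all add: step_def)

lemma st_Suc_c2:
  assumes "0 < b j" "\<not> b j \<le> cw (st j)"
  shows "cG (st (Suc j)) = butlast (cG (st j))"
    "cR (st (Suc j)) = cR (st j)"
    "cw (st (Suc j)) = cw (st j) + a (qsel (b j) (st j)) - b j"
  using assms by (simp_all add: step_def)

lemma inv_step:
  assumes iv: "cinv j"
  shows "cinv (Suc j)"
proof (cases "0 < b j")
  case False
  then have e: "st (Suc j) = st j" by (rule st_Suc_inactive)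
  have bd: "b (Suc j) \<le> b j" by (rule b_dec) simp
  have sm: "(\<Sum>i<Suc k. b (Suc j + i)) \<le> (\<Sum>i<Suc k. b (j + i))" for k
    by (rule sum_mono) (rule b_dec, simp)
  have ivm: "(\<Sum>i<Suc k. b (j + i)) \<le> max (\<Sum>i<Suc k. cseq (st j) i) (cw (st j) + (\<Sum>i<k. cseq (st j) i))" for k
    using iv unfolding cinv_def by blast
  show ?thesis unfolding cinv_def e
  proof (intro conjI ballI allI)
    fix g assume "g \<in> set (cG (st j))"
    then show "b (Suc j) < a g" using iv bd unfolding cinv_def by (auto intro: le_less_trans)
  next
    fix k show "(\<Sum>i<Suc k. b (Suc j + i)) \<le> max (\<Sum>i<Suc k. cseq (st j) i) (cw (st j) + (\<Sum>i<k. cseq (st j) i))"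
      using sm[of k] ivm[of k] by linarith
  qed (use iv in \<open>auto simp: cinv_def\<close>)
next
  case pos: True
  define s where "s = st j"
  define be where "be = b j"
  define q where "q = qsel be s"
  define w where "w = cw s"
  have bd: "b (Suc j) \<le> be" unfolding be_def by (rule b_dec) simp
  have ivG: "\<forall>g\<in>set (cG s). be < a g" and ivR: "a (cR s) \<le> w" and ivd: "distinct (cG s)"
    and ivs: "set (cG s) \<subseteq> {..<cR s}"
    and ivm: "\<And>k. (\<Sum>i<Suc k. b (j+i)) \<le> max (\<Sum>i<Suc k. cseq s i) (w + (\<Sum>i<k. cseq s i))"
    using iv unfolding cinv_def s_def be_def w_def by auto
  have shift: "(\<Sum>i<Suc k. b (Suc j + i)) = (\<Sum>i<Suc k. b (j + Suc i))" for k by simp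
  show ?thesis
  proof (cases "be \<le> w")
    case c1: True
    note q1 = case1_q[of be s, folded q_def]
    have qR: "cR s \<le> q" and aq: "a q \<le> be" and mid: "\<And>q'. cR s \<le> q' \<Longrightarrow> q' < q \<Longrightarrow> be < a q'"
      using q1 pos c1 unfolding be_def w_def by auto
    have G': "cG (st (Suc j)) = cG s @ [cR s..<q]" and R': "cR (st (Suc j)) = Suc q"
      and w': "cw (st (Suc j)) = w + a q - be"
      using st_Suc_c1[OF pos] c1 unfolding s_def be_def q_def w_def by auto
    define r where "r = length (cG s) + (q - cR s)"
    have cs': "cseq (st (Suc j)) i = (if i < r then cseq s i else cseq s (Suc i))" for i
      unfolding r_def by (rule cseq_case1[OF qR G' R'])
    have cr: "cseq s r = a q"
    proof -
      have "\<not> r < length (cG s)" unfolding r_def by simp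
      moreover have "cR s + (r - length (cG s)) = q" unfolding r_def using qR by simp
      ultimately show ?thesis unfolding cseq_def by simp
    qed
    have big: "be \<le> cseq s i" if "i < r" for i
    proof (cases "i < length (cG s)")
      case True then show ?thesis unfolding cseq_def using ivG by (auto intro: less_imp_le)
    next
      case False then show ?thesis unfolding cseq_def using that mid[of "cR s + (i - length (cG s))"]
        unfolding r_def by (auto intro: less_imp_le)
    qed
    have mj: "(\<Sum>i<Suc k. b (j + Suc i)) \<le> max (\<Sum>i<Suc k. if i < r then cseq s i else cseq s (Suc i))
            (w + cseq s r - be + (\<Sum>i<k. if i < r then cseq s i else cseq s (Suc i)))" for k
      by (rule maj_step[where bs="\<lambda>i. b (j + i)"]) (use big ivm cr aq b_dec in \<open>auto simp: be_def\<close>)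
    show ?thesis unfolding cinv_def
    proof (intro conjI ballI allI)
      fix g assume "g \<in> set (cG (st (Suc j)))"
      then show "b (Suc j) < a g" using ivG mid bd unfolding G' by (auto intro: le_less_trans)
    next
      show "a (cR (st (Suc j))) \<le> cw (st (Suc j))" unfolding R' w' using a_dec[of q "Suc q"] c1 by simp
    next
      show "distinct (cG (st (Suc j)))" unfolding G' using ivd ivs by auto
    next
      show "set (cG (st (Suc j))) \<subseteq> {..<cR (st (Suc j))}" unfolding G' R' using ivs qR by auto
    next
      fix k show "(\<Sum>i<Suc k. b (Suc j + i)) \<le> max (\<Sum>i<Suc k. cseq (st (Suc j)) i) (cw (st (Suc j)) + (\<Sum>i<k. cseq (st (Suc j)) i))"
        unfolding shift w' cs' using mj[of k] cr by simp
    qed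
  next
    case c2: False
    note q2 = case2_q[OF iv pos, folded s_def be_def q_def w_def]
    have ne: "cG s \<noteq> []" and ql: "q = last (cG s)" and qin: "q \<in> set (cG s)" and aq: "be < a q"
      using q2 c2 unfolding q_def by auto
    have G': "cG (st (Suc j)) = butlast (cG s)" and R': "cR (st (Suc j)) = cR s"
      and w': "cw (st (Suc j)) = w + a q - be"
      using st_Suc_c2[OF pos] c2 unfolding s_def be_def q_def w_def by auto
    define r where "r = length (cG s) - 1"
    have cs': "cseq (st (Suc j)) i = (if i < r then cseq s i else cseq s (Suc i))" for i
      unfolding r_def by (rule cseq_case2[OF ne G' R'])
    have cr: "cseq s r = a q" unfolding cseq_def r_def ql using ne by (simp add: last_conv_nth)
    have big: "be \<le> cseq s i" if "i < r" for i
      unfolding cseq_def using that ivG unfolding r_def by (auto intro: less_imp_le)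
    have small: "\<forall>i. r < i \<longrightarrow> cseq s i \<le> w"
    proof (intro allI impI)
      fix i assume "r < i"
      then have "\<not> i < length (cG s)" unfolding r_def by simp
      moreover have "a (cR s + (i - length (cG s))) \<le> a (cR s)" by (rule a_dec) simp
      ultimately show "cseq s i \<le> w" unfolding cseq_def using ivR by simp
    qed
    have mj: "(\<Sum>i<Suc k. b (j + Suc i)) \<le> max (\<Sum>i<Suc k. if i < r then cseq s i else cseq s (Suc i))
            (w + cseq s r - be + (\<Sum>i<k. if i < r then cseq s i else cseq s (Suc i)))" for k
      by (rule maj_step[where bs="\<lambda>i. b (j + i)"]) (use big ivm small b_dec in \<open>auto simp: be_def\<close>)
    show ?thesis unfolding cinv_def
    proof (intro conjI ballI allI)
      fix g assume "g \<in> set (cG (st (Suc j)))"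
      then have "g \<in> set (cG s)" unfolding G' by (rule in_set_butlastD)
      then show "b (Suc j) < a g" using ivG bd by (auto intro: le_less_trans)
    next
      show "a (cR (st (Suc j))) \<le> cw (st (Suc j))" unfolding R' w' using ivR aq by simp
    next
      show "distinct (cG (st (Suc j)))" unfolding G' using ivd by (simp add: distinct_butlast)
    next
      show "set (cG (st (Suc j))) \<subseteq> {..<cR (st (Suc j))}" unfolding G' R' using ivs by (auto dest: in_set_butlastD)
    next
      fix k show "(\<Sum>i<Suc k. b (Suc j + i)) \<le> max (\<Sum>i<Suc k. cseq (st (Suc j)) i) (cw (st (Suc j)) + (\<Sum>i<k. cseq (st (Suc j)) i))"
        unfolding shift w' cs' using mj[of k] cr by simp
    qed
  qed
qed

lemma inv_all: "cinv j"
  by (induction j) (auto intro: inv0 inv_step)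


lemma active_facts:
  assumes pos: "0 < b j"
  defines "s \<equiv> st j" and "q \<equiv> qsel (b j) (st j)"
  defines "cs \<equiv> csf (cw s) (a q) (b j)" and "sn \<equiv> snf (cw s) (a q) (b j)"
  shows "q \<notin> usedset s" "usedset s \<subseteq> usedset (st (Suc j))" "q \<in> usedset (st (Suc j))"
    "cR s \<le> cR (st (Suc j))"
    "cf (st (Suc j)) = (\<lambda>p. (- sn) * cf s p + cs * dl q p)"
    "col j = (\<lambda>p. cs * cf s p + sn * dl q p)"
    "cs\<^sup>2 + sn\<^sup>2 = 1" "cs\<^sup>2 * cw s + sn\<^sup>2 * a q = b j"
    "sn\<^sup>2 * cw s + cs\<^sup>2 * a q = cw (st (Suc j))"
proof -
  have iv: "cinv j" by (rule inv_all)
  have ivs: "set (cG s) \<subseteq> {..<cR s}" and ivd: "distinct (cG s)"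
    using iv unfolding cinv_def s_def by auto
  have hyp: "(a q \<le> b j \<and> b j \<le> cw s) \<or> (cw s < b j \<and> b j < a q)"
  proof (cases "b j \<le> cw s")
    case True then show ?thesis using case1_q(2)[OF pos True] unfolding q_def s_def by simp
  next
    case False then show ?thesis using case2_q(4)[OF iv pos] unfolding q_def s_def by simp
  qed
  note ra = rot_alg[OF hyp, folded csf_def snf_def, folded cs_def sn_def]
  show "cs\<^sup>2 + sn\<^sup>2 = 1" "cs\<^sup>2 * cw s + sn\<^sup>2 * a q = b j" by (rule ra(1), rule ra(2))
  show "sn\<^sup>2 * cw s + cs\<^sup>2 * a q = cw (st (Suc j))"
    using ra(3) pos unfolding s_def q_def by (simp add: step_def)
  show "cf (st (Suc j)) = (\<lambda>p. (- sn) * cf s p + cs * dl q p)"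
    using pos unfolding s_def q_def cs_def sn_def by (simp add: step_def)
  show "col j = (\<lambda>p. cs * cf s p + sn * dl q p)"
    using pos unfolding col_def colv_def s_def q_def cs_def sn_def by simp
  have "q \<notin> usedset s \<and> usedset s \<subseteq> usedset (st (Suc j)) \<and> q \<in> usedset (st (Suc j)) \<and> cR s \<le> cR (st (Suc j))"
  proof (cases "b j \<le> cw s")
    case c1: True
    have qR: "cR s \<le> q" using case1_q(1)[OF pos c1] unfolding q_def s_def .
    have G': "cG (st (Suc j)) = cG s @ [cR s..<q]" and R': "cR (st (Suc j)) = Suc q"
      using st_Suc_c1[OF pos] c1 unfolding s_def q_def by auto
    show ?thesis unfolding usedset_def G' R' using qR ivs by auto
  next
    case c2: False
    have qin: "q \<in> set (cG s)" using case2_q(3)[OF iv pos] c2 unfolding q_def s_def by simp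
    have ne: "cG s \<noteq> []" using case2_q(1)[OF iv pos] c2 unfolding s_def by simp
    have ql: "q = last (cG s)" using case2_q(2)[OF iv pos] c2 unfolding q_def s_def by simp
    have G': "cG (st (Suc j)) = butlast (cG s)" and R': "cR (st (Suc j)) = cR s"
      using st_Suc_c2[OF pos] c2 unfolding s_def by auto
    have "q \<notin> set (butlast (cG s))"
    proof -
      have "cG s = butlast (cG s) @ [q]" using ne ql by simp
      then show ?thesis using ivd by (metis distinct_append disjoint_iff list.set_intros(1))
    qed
    then show ?thesis unfolding usedset_def G' R' using qin ivs by (auto dest: in_set_butlastD)
  qed
  then show "q \<notin> usedset s" "usedset s \<subseteq> usedset (st (Suc j))" "q \<in> usedset (st (Suc j))"
    "cR s \<le> cR (st (Suc j))" by auto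
qed

lemma inactive_col: "\<not> 0 < b j \<Longrightarrow> col j = (\<lambda>p. 0)"
  unfolding col_def colv_def by simp

lemma usedset_bound: "p \<in> usedset s \<Longrightarrow> p < cR s"
  unfolding usedset_def by simp

definition VI :: "nat \<Rightarrow> bool" where
  "VI j \<longleftrightarrow> (\<forall>p. cf (st j) p \<noteq> 0 \<longrightarrow> p \<in> usedset (st j)) \<and>
     (\<forall>i<j. \<forall>p. col i p \<noteq> 0 \<longrightarrow> p \<in> usedset (st j)) \<and>
     (\<forall>M \<ge> cR (st j). (\<Sum>p<M. a p * (cf (st j) p)\<^sup>2) = cw (st j)) \<and>
     (\<forall>M \<ge> cR (st j). \<forall>c t. (\<Sum>p<M. ((\<Sum>i<j. c i * col i p) + t * cf (st j) p)\<^sup>2)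
          = (\<Sum>i<j. if 0 < b i then (c i)\<^sup>2 else 0) + t\<^sup>2)"

lemma VI0: "VI 0"
proof -
  have "(\<Sum>p<M. a p * (dl 0 p)\<^sup>2) = a 0" if "1 \<le> M" for M
    using sum_dl[of "\<lambda>_. 0" 0 M a 0 1] that by simp
  moreover have "(\<Sum>p<M. (t * dl 0 p)\<^sup>2) = t\<^sup>2" if "1 \<le> M" for M t
    using sum_dl[of "\<lambda>_. 0" 0 M "\<lambda>_. 1" 0 t] that by simp
  ultimately show ?thesis unfolding VI_def usedset_def by (auto simp: dl_def)
qed

lemma VI_step:
  assumes vi: "VI j"
  shows "VI (Suc j)"
proof (cases "0 < b j")
  case False
  then have e: "st (Suc j) = st j" by (rule st_Suc_inactive)
  have cz: "col j = (\<lambda>p. 0)" by (rule inactive_col[OF False])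
  show ?thesis using vi False unfolding VI_def e by (auto simp: cz less_Suc_eq)
next
  case pos: True
  define s where "s = st j"
  define q where "q = qsel (b j) (st j)"
  define cs where "cs = csf (cw s) (a q) (b j)"
  define sn where "sn = snf (cw s) (a q) (b j)"
  note af = active_facts[OF pos, folded s_def q_def, folded cs_def sn_def]
  have fsupp: "\<And>p. cf s p \<noteq> 0 \<Longrightarrow> p \<in> usedset s" and csupp: "\<And>i p. i < j \<Longrightarrow> col i p \<noteq> 0 \<Longrightarrow> p \<in> usedset s"
    and ray: "\<And>M. cR s \<le> M \<Longrightarrow> (\<Sum>p<M. a p * (cf s p)\<^sup>2) = cw s"
    and par: "\<And>M c t. cR s \<le> M \<Longrightarrow> (\<Sum>p<M. ((\<Sum>i<j. c i * col i p) + t * cf s p)\<^sup>2)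
          = (\<Sum>i<j. if 0 < b i then (c i)\<^sup>2 else 0) + t\<^sup>2"
    using vi unfolding VI_def s_def by auto
  have fq: "cf s q = 0" using fsupp af(1) by blast
  have cq: "col i q = 0" if "i < j" for i using csupp[OF that] af(1) by blast
  have qlt: "q < cR (st (Suc j))" using af(3) by (rule usedset_bound)
  show ?thesis unfolding VI_def
  proof (intro conjI allI impI)
    fix p assume "cf (st (Suc j)) p \<noteq> 0"
    then have "cf s p \<noteq> 0 \<or> p = q" unfolding af(5) by (auto simp: dl_def split: if_splits)
    then show "p \<in> usedset (st (Suc j))" using fsupp af(2,3) by blast
  next
    fix i p assume i: "i < Suc j" and nz: "col i p \<noteq> 0"
    show "p \<in> usedset (st (Suc j))"
    proof (cases "i = j")
      case True
      have "col j p \<noteq> 0" using nz True by simp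
      then have "cf s p \<noteq> 0 \<or> p = q" unfolding af(6) by (auto simp: dl_def split: if_splits)
      then show ?thesis using fsupp af(2,3) by blast
    next
      case False then have "i < j" using i by simp
      then show ?thesis using csupp nz af(2) by blast
    qed
  next
    fix M assume M: "cR (st (Suc j)) \<le> M"
    have Ms: "cR s \<le> M" using af(4) M by simp
    show "(\<Sum>p<M. a p * (cf (st (Suc j)) p)\<^sup>2) = cw (st (Suc j))"
      unfolding af(5) using sum_dl[of "cf s" q M a "- sn" cs] fq qlt M ray[OF Ms] af(9) by simp
  next
    fix M c t assume M: "cR (st (Suc j)) \<le> M"
    have Ms: "cR s \<le> M" using af(4) M by simp
    define t' where "t' = c j * cs - t * sn"
    define ga where "ga = c j * sn + t * cs"
    define u where "u p = (\<Sum>i<j. c i * col i p) + t' * cf s p" for p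
    have uq: "u q = 0" unfolding u_def using fq cq by simp
    have eq: "(\<Sum>i<Suc j. c i * col i p) + t * cf (st (Suc j)) p = 1 * u p + ga * dl q p" for p
      unfolding u_def t'_def ga_def af(5) by (simp add: af(6) algebra_simps)
    have "(\<Sum>p<M. ((\<Sum>i<Suc j. c i * col i p) + t * cf (st (Suc j)) p)\<^sup>2)
        = (\<Sum>p<M. (\<lambda>_. 1) p * (1 * u p + ga * dl q p)\<^sup>2)" unfolding eq by simp
    also have "\<dots> = (\<Sum>p<M. (u p)\<^sup>2) + ga\<^sup>2"
      using sum_dl[of u q M "\<lambda>_. 1" 1 ga] uq qlt M by simp
    also have "(\<Sum>p<M. (u p)\<^sup>2) = (\<Sum>i<j. if 0 < b i then (c i)\<^sup>2 else 0) + t'\<^sup>2"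
      unfolding u_def by (rule par[OF Ms])
    finally have X: "(\<Sum>p<M. ((\<Sum>i<Suc j. c i * col i p) + t * cf (st (Suc j)) p)\<^sup>2)
        = (\<Sum>i<j. if 0 < b i then (c i)\<^sup>2 else 0) + (t'\<^sup>2 + ga\<^sup>2)" by simp
    have "t'\<^sup>2 + ga\<^sup>2 = (c j)\<^sup>2 * (cs\<^sup>2 + sn\<^sup>2) + t\<^sup>2 * (cs\<^sup>2 + sn\<^sup>2)"
      unfolding t'_def ga_def by (simp add: power2_eq_square algebra_simps)
    then show "(\<Sum>p<M. ((\<Sum>i<Suc j. c i * col i p) + t * cf (st (Suc j)) p)\<^sup>2)
        = (\<Sum>i<Suc j. if 0 < b i then (c i)\<^sup>2 else 0) + t\<^sup>2"
      using af(7) pos X by simp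
  qed
qed

lemma VI_all: "VI j"
  by (induction j) (auto intro: VI0 VI_step)

lemma col_ray:
  assumes pos: "0 < b j" and M: "cR (st (Suc j)) \<le> M"
  shows "(\<Sum>p<M. a p * (col j p)\<^sup>2) = b j"
proof -
  define s where "s = st j"
  define q where "q = qsel (b j) (st j)"
  define cs where "cs = csf (cw s) (a q) (b j)"
  define sn where "sn = snf (cw s) (a q) (b j)"
  note af = active_facts[OF pos, folded s_def q_def, folded cs_def sn_def]
  have vi: "VI j" by (rule VI_all)
  have fq: "cf s q = 0" using vi af(1) unfolding VI_def s_def by blast
  have qlt: "q < cR (st (Suc j))" using af(3) by (rule usedset_bound)
  have Ms: "cR s \<le> M" using af(4) M by simp
  have ray: "(\<Sum>p<M. a p * (cf s p)\<^sup>2) = cw s" using vi Ms unfolding VI_def s_def by blast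
  show ?thesis unfolding af(6) using sum_dl[of "cf s" q M a cs sn] fq qlt M ray af(8) by simp
qed

lemma col_supp: "cR (st (Suc j)) \<le> p \<Longrightarrow> col j p = 0"
proof (rule ccontr)
  assume p: "cR (st (Suc j)) \<le> p" and nz: "col j p \<noteq> 0"
  have "\<forall>i<Suc j. \<forall>p. col i p \<noteq> 0 \<longrightarrow> p \<in> usedset (st (Suc j))"
    using VI_all[of "Suc j"] unfolding VI_def by blast
  then have "p \<in> usedset (st (Suc j))" using nz by blast
  then show False using usedset_bound p by fastforce
qed

lemma col_parseval:
  assumes fN: "finite N"
  shows "(\<Sum>p<M. (\<Sum>n\<in>N. c n * col n p)\<^sup>2) \<le> (\<Sum>n\<in>N. (c n)\<^sup>2)"
proof -
  define J where "J = Suc (Max (insert 0 N))"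
  have NJ: "N \<subseteq> {..<J}" unfolding J_def using fN by (auto simp: le_imp_less_Suc)
  define c' where "c' i = (if i \<in> N then c i else 0)" for i
  have sumeq: "(\<Sum>n\<in>N. c n * col n p) = (\<Sum>i<J. c' i * col i p)" for p
    unfolding c'_def by (rule sum.mono_neutral_cong_left) (use NJ in auto)
  define M' where "M' = max M (cR (st J))"
  have "(\<Sum>p<M. (\<Sum>n\<in>N. c n * col n p)\<^sup>2) \<le> (\<Sum>p<M'. (\<Sum>n\<in>N. c n * col n p)\<^sup>2)"
    unfolding M'_def by (rule sum_mono2) auto
  also have "\<dots> = (\<Sum>p<M'. ((\<Sum>i<J. c' i * col i p) + 0 * cf (st J) p)\<^sup>2)"
    unfolding sumeq by simp
  also have "\<dots> = (\<Sum>i<J. if 0 < b i then (c' i)\<^sup>2 else 0) + 0\<^sup>2"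
  proof -
    have par: "\<forall>M\<ge>cR (st J). \<forall>c t. (\<Sum>p<M. ((\<Sum>i<J. c i * col i p) + t * cf (st J) p)\<^sup>2)
          = (\<Sum>i<J. if 0 < b i then (c i)\<^sup>2 else 0) + t\<^sup>2"
      using VI_all[of J] unfolding VI_def by blast
    have "cR (st J) \<le> M'" unfolding M'_def by simp
    from par[rule_format, OF this, of c' 0] show ?thesis .
  qed
  also have "\<dots> \<le> (\<Sum>i<J. (c' i)\<^sup>2)" by (simp add: sum_mono)
  also have "\<dots> = (\<Sum>n\<in>N. (c n)\<^sup>2)"
    unfolding c'_def by (rule sum.mono_neutral_cong_right) (use NJ in auto)
  finally show ?thesis .
qed

end


section \<open>Decreasing rearrangement facts\<close>

lemma finite_ge:
  fixes x :: "nat \<Rightarrow> real"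
  assumes x: "x \<longlonglongrightarrow> 0" and e: "0 < e"
  shows "finite {k. e \<le> x k}"
proof -
  obtain N where N: "\<And>k. N \<le> k \<Longrightarrow> norm (x k - 0) < e"
    using LIMSEQ_D[OF x e] by blast
  have "{k. e \<le> x k} \<subseteq> {..<N}"
  proof
    fix k assume "k \<in> {k. e \<le> x k}"
    then have "e \<le> x k" by simp
    then show "k \<in> {..<N}" using N[of k] by (cases "N \<le> k") auto
  qed
  then show ?thesis by (rule finite_subset) simp
qed

lemma finite_gt:
  fixes x :: "nat \<Rightarrow> real"
  assumes x: "x \<longlonglongrightarrow> 0" and e: "0 < e"
  shows "finite {k. e < x k}"
  by (rule finite_subset[OF _ finite_ge[OF x e]]) auto

definition Dset :: "(nat \<Rightarrow> real) \<Rightarrow> nat \<Rightarrow> real set" where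
  "Dset x n = {t. 0 \<le> t \<and> finite {k. x k > t} \<and> card {k. x k > t} \<le> n}"

lemma drearr_Dset: "drearr x n = Inf (Dset x n)"
  unfolding drearr_def Dset_def by simp

lemma Dset_ne:
  fixes x :: "nat \<Rightarrow> real"
  assumes x: "x \<longlonglongrightarrow> 0"
  shows "Dset x n \<noteq> {}"
proof -
  obtain K where K: "0 < K" "\<And>k. norm (x k) \<le> K"
    using convergent_imp_Bseq[OF convergentI[OF x]] unfolding Bseq_def by blast
  have "{k. x k > K} = {}" using K(2) by (auto simp: abs_le_iff not_less)
  then have "K \<in> Dset x n" unfolding Dset_def using K(1) by simp
  then show ?thesis by blast
qed

lemma Dset_bdd: "bdd_below (Dset x n)"
  unfolding Dset_def by (rule bdd_belowI[of _ 0]) auto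

lemma drearr_nn: "x \<longlonglongrightarrow> 0 \<Longrightarrow> 0 \<le> drearr x n"
  unfolding drearr_Dset by (rule cInf_greatest[OF Dset_ne]) (auto simp: Dset_def)

lemma drearr_dec:
  assumes x: "x \<longlonglongrightarrow> 0" and nm: "n \<le> m"
  shows "drearr x m \<le> drearr x n"
  unfolding drearr_Dset
  by (rule cInf_superset_mono[OF Dset_ne[OF x] Dset_bdd]) (use nm in \<open>auto simp: Dset_def\<close>)

lemma drearr_small:
  assumes x: "x \<longlonglongrightarrow> 0" and e: "0 < e"
  shows "\<exists>q. drearr x q \<le> e"
proof -
  have "e \<in> Dset x (card {k. x k > e})" unfolding Dset_def using finite_gt[OF x e] e by simp
  then have "drearr x (card {k. x k > e}) \<le> e" unfolding drearr_Dset by (rule cInf_lower[OF _ Dset_bdd])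
  then show ?thesis by blast
qed

lemma sum_le_drearr:
  fixes y :: "nat \<Rightarrow> real"
  assumes y: "y \<longlonglongrightarrow> 0"
  shows "finite S \<Longrightarrow> card S = n \<Longrightarrow> (\<Sum>s\<in>S. y s) \<le> (\<Sum>k<n. drearr y k)"
proof (induction n arbitrary: S)
  case 0 then show ?case by simp
next
  case (Suc n)
  then have ne: "S \<noteq> {}" by auto
  define v where "v = Min (y ` S)"
  have "v \<in> y ` S" unfolding v_def using Suc.prems ne by (intro Min_in) auto
  then obtain m where m: "m \<in> S" "y m = v" by blast
  have mmin: "y m \<le> y s" if "s \<in> S" for s unfolding m(2) v_def using Suc.prems that by (intro Min_le) auto
  have cS: "card (S - {m}) = n" using Suc.prems m(1) by simp
  have IH: "(\<Sum>s\<in>S - {m}. y s) \<le> (\<Sum>k<n. drearr y k)" using Suc.IH[OF _ cS] Suc.prems by simp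
  have ym: "y m \<le> drearr y n"
    unfolding drearr_Dset
  proof (rule cInf_greatest[OF Dset_ne[OF y]])
    fix t assume t: "t \<in> Dset y n"
    show "y m \<le> t"
    proof (rule ccontr)
      assume "\<not> y m \<le> t"
      then have "S \<subseteq> {k. y k > t}" using mmin by fastforce
      then have "card S \<le> card {k. y k > t}" using t unfolding Dset_def by (intro card_mono) auto
      then show False using t Suc.prems unfolding Dset_def by simp
    qed
  qed
  have "(\<Sum>s\<in>S. y s) = y m + (\<Sum>s\<in>S - {m}. y s)" using Suc.prems m(1) by (simp add: sum.remove)
  also have "\<dots> \<le> drearr y n + (\<Sum>k<n. drearr y k)" using ym IH by simp
  finally show ?case by simp
qed

section \<open>Sorting enumeration\<close>

definition pickf :: "(nat \<Rightarrow> real) \<Rightarrow> nat set \<Rightarrow> nat" where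
  "pickf y U = (SOME i. i \<notin> U \<and> (\<forall>i'. i' \<notin> U \<longrightarrow> y i' \<le> y i))"

lemma pickf_ex:
  fixes y :: "nat \<Rightarrow> real"
  assumes y: "y \<longlonglongrightarrow> 0" and ynn: "\<And>k. 0 \<le> y k" and U: "finite U"
  shows "\<exists>i. i \<notin> U \<and> (\<forall>i'. i' \<notin> U \<longrightarrow> y i' \<le> y i)"
proof (cases "\<exists>i0. i0 \<notin> U \<and> 0 < y i0")
  case True
  then obtain i0 where i0: "i0 \<notin> U" "0 < y i0" by blast
  define A where "A = {i. i \<notin> U \<and> y i0 \<le> y i}"
  have fA: "finite A" unfolding A_def by (rule finite_subset[OF _ finite_ge[OF y i0(2)]]) auto
  have "y i0 \<in> y ` A" unfolding A_def using i0 by auto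
  then have neA: "A \<noteq> {}" by auto
  have "Max (y ` A) \<in> y ` A" using fA neA by (intro Max_in) auto
  then obtain m where m: "m \<in> A" "y m = Max (y ` A)" by (metis imageE)
  have "\<forall>i'. i' \<notin> U \<longrightarrow> y i' \<le> y m"
  proof (intro allI impI)
    fix i' assume i': "i' \<notin> U"
    show "y i' \<le> y m"
    proof (cases "y i0 \<le> y i'")
      case True then have "i' \<in> A" unfolding A_def using i' by simp
      then show ?thesis unfolding m(2) using fA by (intro Max_ge) auto
    next
      case False then show ?thesis using m(1) unfolding A_def by simp
    qed
  qed
  then show ?thesis using m(1) unfolding A_def by blast
next
  case False
  obtain i where "i \<notin> U" using U by (meson ex_new_if_finite infinite_UNIV_nat)
  then show ?thesis using False ynn by (meson not_le order_trans)
qed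

primrec Lst :: "(nat \<Rightarrow> real) \<Rightarrow> nat \<Rightarrow> nat list" where
  "Lst y 0 = []"
| "Lst y (Suc j) = Lst y j @ [pickf y (set (Lst y j))]"

definition sig :: "(nat \<Rightarrow> real) \<Rightarrow> nat \<Rightarrow> nat" where
  "sig y j = pickf y (set (Lst y j))"

lemma Lst_set: "set (Lst y j) = sig y ` {..<j}"
  by (induction j) (auto simp: sig_def lessThan_Suc)

context
  fixes y :: "nat \<Rightarrow> real"
  assumes y: "y \<longlonglongrightarrow> 0" and ynn: "\<And>k. 0 \<le> y k"
begin

lemma sig_prop: "sig y j \<notin> sig y ` {..<j} \<and> (\<forall>i'. i' \<notin> sig y ` {..<j} \<longrightarrow> y i' \<le> y (sig y j))"
proof -
  have "\<exists>i. i \<notin> set (Lst y j) \<and> (\<forall>i'. i' \<notin> set (Lst y j) \<longrightarrow> y i' \<le> y i)"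
    by (rule pickf_ex[OF y ynn]) simp
  then have "sig y j \<notin> set (Lst y j) \<and> (\<forall>i'. i' \<notin> set (Lst y j) \<longrightarrow> y i' \<le> y (sig y j))"
    unfolding sig_def pickf_def by (rule someI_ex)
  then show ?thesis unfolding Lst_set .
qed

lemma sig_inj: "inj (sig y)"
proof (rule injI)
  fix i j assume e: "sig y i = sig y j"
  show "i = j"
  proof (rule ccontr)
    assume "i \<noteq> j"
    then consider "i < j" | "j < i" by linarith
    then show False
    proof cases
      case 1 then have "sig y i \<in> sig y ` {..<j}" by auto
      then show False using sig_prop[of j] e by simp
    next
      case 2 then have "sig y j \<in> sig y ` {..<i}" by auto
      then show False using sig_prop[of i] e by simp
    qed
  qed
qed

lemma sig_dec1: "y (sig y (Suc j)) \<le> y (sig y j)"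
proof -
  have "sig y (Suc j) \<notin> sig y ` {..<Suc j}" using sig_prop[of "Suc j"] by blast
  then have "sig y (Suc j) \<notin> sig y ` {..<j}" by auto
  then show ?thesis using sig_prop[of j] by blast
qed

lemma sig_dec: "i \<le> j \<Longrightarrow> y (sig y j) \<le> y (sig y i)"
proof (induction j rule: dec_induct)
  case base then show ?case by simp
next
  case (step n) then show ?case using sig_dec1[of n] by simp
qed

lemma sig_covers: "0 < y s \<Longrightarrow> s \<in> range (sig y)"
proof (rule ccontr)
  assume pos: "0 < y s" and ns: "s \<notin> range (sig y)"
  have "y s \<le> y (sig y j)" for j using sig_prop[of j] ns by blast
  then have "range (sig y) \<subseteq> {k. y s \<le> y k}" by auto
  then have "finite (range (sig y))" by (rule finite_subset[OF _ finite_ge[OF y pos]])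
  then show False using sig_inj finite_imageD infinite_UNIV_nat by blast
qed

end



theorem lemma4p2:
  fixes x y :: "nat \<Rightarrow> real"
  assumes "x \<longlonglongrightarrow> 0" and "y \<longlonglongrightarrow> 0"
    and "\<forall>k. 0 \<le> x k" and "\<forall>k. 0 \<le> y k"
    and "submaj y x"
  shows "\<exists>V. is_bdd_op V \<and> positive_op V \<and>
             (\<forall>j. op_entry V j j = complex_of_real (y j)) \<and>
             (\<forall>k. sing_val k V \<le> drearr x k)"
proof -
  note x = assms(1) and y = assms(2)
  have ynn: "\<And>k. 0 \<le> y k" using assms(4) by blast
  define a where "a = drearr x"
  define sg where "sg = sig y"
  define bb where "bb j = y (sg j)" for j
  have a_dec: "\<And>i j. i \<le> j \<Longrightarrow> a j \<le> a i" unfolding a_def by (rule drearr_dec[OF x])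
  have a_nn: "\<And>i. 0 \<le> a i" unfolding a_def by (rule drearr_nn[OF x])
  have inj: "inj sg" unfolding sg_def by (rule sig_inj[OF y ynn])
  have maj: "(\<Sum>i<Suc n. bb i) \<le> (\<Sum>i<Suc n. a i)" for n
  proof -
    have "(\<Sum>i<Suc n. bb i) = (\<Sum>s\<in>sg ` {..<Suc n}. y s)"
      unfolding bb_def by (rule sum.reindex[symmetric, unfolded comp_def]) (rule inj_on_subset[OF inj], simp)
    also have "\<dots> \<le> (\<Sum>k<Suc n. drearr y k)"
      by (rule sum_le_drearr[OF y]) (auto simp: card_image inj_on_subset[OF inj])
    also have "\<dots> \<le> (\<Sum>k<Suc n. a k)"
      using assms(5) unfolding submaj_def a_def by (simp add: lessThan_Suc_atMost)
    finally show ?thesis .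
  qed
  interpret C: chain a bb
  proof
    show "\<And>e. 0 < e \<Longrightarrow> \<exists>q. a q \<le> e" unfolding a_def by (rule drearr_small[OF x])
    show "\<And>i j. i \<le> j \<Longrightarrow> bb j \<le> bb i" unfolding bb_def sg_def by (rule sig_dec[OF y ynn])
    show "\<And>n. (\<Sum>i<Suc n. bb i) \<le> (\<Sum>i<Suc n. a i)" by (rule maj)
  qed (auto simp: a_dec a_nn bb_def ynn)
  define g where "g n p = (if n \<in> range sg then C.col (inv sg n) p else 0)" for n p
  define sb where "sb n = (if n \<in> range sg then cR (C.st (Suc (inv sg n))) else 0)" for n
  have gs: "g (sg j) = C.col j" for j unfolding g_def using inj by (auto simp: fun_eq_iff)
  have sbs: "sb (sg j) = cR (C.st (Suc j))" for j unfolding sb_def using inj by auto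
  interpret F: fam g sb
  proof
    fix n p assume "sb n \<le> p"
    then show "g n p = 0" unfolding g_def sb_def by (auto intro: C.col_supp)
  next
    fix N :: "nat set" and c :: "nat \<Rightarrow> real" and M :: nat
    assume fN: "finite N"
    define J where "J = sg -` N"
    have fJ: "finite J" unfolding J_def using fN inj by (intro finite_vimageI) auto
    have img: "sg ` J = N \<inter> range sg" unfolding J_def by auto
    have injJ: "inj_on sg J" using inj by (rule inj_on_subset) simp
    have eq: "(\<Sum>n\<in>N. c n * g n p) = (\<Sum>j\<in>J. c (sg j) * C.col j p)" for p
    proof -
      have "(\<Sum>n\<in>N. c n * g n p) = (\<Sum>n\<in>N \<inter> range sg. c n * g n p)"
        by (rule sum.mono_neutral_right) (use fN in \<open>auto simp: g_def\<close>)
      also have "\<dots> = (\<Sum>n\<in>sg ` J. c n * g n p)" unfolding img ..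
      also have "\<dots> = (\<Sum>j\<in>J. c (sg j) * g (sg j) p)" by (rule sum.reindex[OF injJ, unfolded comp_def])
      finally show ?thesis unfolding gs .
    qed
    have "(\<Sum>p<M. (\<Sum>n\<in>N. c n * g n p)\<^sup>2) = (\<Sum>p<M. (\<Sum>j\<in>J. (c (sg j)) * C.col j p)\<^sup>2)"
      unfolding eq ..
    also have "\<dots> \<le> (\<Sum>j\<in>J. (c (sg j))\<^sup>2)" by (rule C.col_parseval[OF fJ])
    also have "\<dots> = (\<Sum>n\<in>sg ` J. (c n)\<^sup>2)" by (rule sum.reindex[OF injJ, unfolded comp_def, symmetric])
    also have "\<dots> \<le> (\<Sum>n\<in>N. (c n)\<^sup>2)" by (rule sum_mono2[OF fN]) (auto simp: img)
    finally show "(\<Sum>p<M. (\<Sum>n\<in>N. c n * g n p)\<^sup>2) \<le> (\<Sum>n\<in>N. (c n)\<^sup>2)" .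
  qed
  define V where "V = F.Op a"
  have abnd: "\<bar>a p\<bar> \<le> a 0" for p using a_nn[of p] a_dec[of 0 p] by simp
  have bdd: "is_bdd_op V" unfolding V_def by (rule F.Op_bdd[OF abnd])
  have pos: "positive_op V" unfolding positive_op_def V_def
    using F.Op_pos[where lam=a and M="a 0"] a_nn abnd by auto
  have entry: "op_entry V n n = complex_of_real (y n)" for n
  proof -
    have e: "op_entry V n n = complex_of_real (\<Sum>p<sb n. a p * (g n p)\<^sup>2)"
      unfolding op_entry_def V_def by (rule F.Op_entry)
    show ?thesis
    proof (cases "n \<in> range sg")
      case True
      then obtain j where j: "n = sg j" by blast
      show ?thesis
      proof (cases "0 < bb j")
        case True
        have "(\<Sum>p<sb n. a p * (g n p)\<^sup>2) = bb j" unfolding j gs sbs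
          by (rule C.col_ray[OF True]) simp
        then show ?thesis using e unfolding j bb_def by simp
      next
        case False
        then have "bb j = 0" using ynn[of "sg j"] unfolding bb_def by simp
        moreover have "C.col j = (\<lambda>p. 0)" by (rule C.inactive_col[OF False])
        ultimately show ?thesis using e unfolding j gs bb_def by simp
      qed
    next
      case False
      then have "y n = 0" using sig_covers[OF y ynn, of n] ynn[of n] unfolding sg_def by force
      moreover have "g n = (\<lambda>p. 0)" unfolding g_def using False by auto
      ultimately show ?thesis using e by simp
    qed
  qed
  have sv: "sing_val k V \<le> a k" for k
  proof -
    define R where "R = F.Op (\<lambda>p. if p < k then a p else 0)"
    have Rb: "is_bdd_op R" unfolding R_def by (rule F.Op_bdd[where M="a 0"]) (use abnd a_nn in auto)
    have Rr: "rank_le R k" unfolding rank_le_def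
    proof (intro exI[of _ "\<lambda>i n. complex_of_real (g n i)"] conjI allI impI)
      fix i show "is_l2 (\<lambda>n. complex_of_real (g n i))" by (rule F.col_l2)
    next
      fix z :: "nat \<Rightarrow> complex" assume "is_l2 z"
      show "\<exists>c. R z = (\<lambda>n. \<Sum>i<k. c i * complex_of_real (g n i))"
        unfolding R_def F.Op_rank by (rule exI[of _ "\<lambda>i. complex_of_real (a i) * F.Sop z i"]) simp
    qed
    have wb: "\<bar>a p - (if p < k then a p else 0)\<bar> \<le> a k" for p
      using a_nn[of k] a_nn[of p] a_dec[of k p] by auto
    show ?thesis
    proof (rule sing_val_le[OF bdd Rb Rr])
      fix z :: "nat \<Rightarrow> complex" assume z: "is_l2 z" and z1: "l2norm z \<le> 1"
      have eq: "(\<lambda>n. V z n - R z n) = F.Op (\<lambda>p. a p - (if p < k then a p else 0)) z"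
        unfolding V_def R_def by (rule F.Op_diff)
      have "l2norm (\<lambda>n. V z n - R z n) \<le> sqrt ((a k)\<^sup>2 * (\<Sum>n. (cmod (z n))\<^sup>2))"
        unfolding eq l2norm_def
        by (rule real_sqrt_le_mono, rule F.Op_bound(2)[OF z wb])
      also have "\<dots> = a k * l2norm z" unfolding l2norm_def using a_nn[of k] by (simp add: real_sqrt_mult)
      also have "\<dots> \<le> a k" using z1 a_nn[of k] by (simp add: mult_left_le)
      finally show "l2norm (\<lambda>n. V z n - R z n) \<le> a k" .
    qed
  qed
  show ?thesis using bdd pos entry sv unfolding a_def by blast
qed


end
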